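(* Let $\mathcal R$ be a graded commutative 2-ring and let $(R,G,\pi,\{g_\gamma\},\{\varphi_x\})$ be a tightening of $\mathcal R$. Then restriction $\mathcal I\mapsto\mathrm r(\mathcal I)$ and extension $I\mapsto\mathrm e(I)$ are mutually inverse inclusion-preserving bijections between homogeneous ideals of $\mathcal R$ and homogeneous ideals of $R$, and they restrict to a homeomorphism $\operatorname{Spec}^h(R)\cong\operatorname{Spc}(\mathcal R)$.
   Context: A graded commutative 2-ring $\mathcal R$ is an essentially small preadditive symmetric monoidal category (tensor additive in each variable) in which all objects are invertible; its grading 2-group $\mathcal G$ is its groupoid of objects and isomorphisms, and $K_0(\mathcal G)$ is the group of isomorphism classes. A morphism $\tilde r$ is a translate of $r$ if $\tilde r=v\circ(g\otimes r)\circ u$ for an object $g$ and isomorphisms $u,v$. A homogeneous ideal of $\mathcal R$ is a two-sided ideal of morphisms closed under tensoring with objects; prime: proper and $s\circ r\in\mathfrak p\Rightarrow s\in\mathfrak p$ or $r\in\mathfrak p$; $\operatorname{Spc}(\mathcal R)$ is the set of primes with Zariski topology. For an abelian group $G$ (written multiplicatively), a $G$-graded commutative ring is a ring $R=\bigoplus_{x\in G}R_x$ with $1\in R_1$, $R_xR_y\subseteq R_{xy}$, and a function $\tau\colon G\times G\to Z(R)_1^\times$ that is symmetric, bilinear, and satisfies $rs=\tau(|r|,|s|)sr$ for homogeneous $r,s$; $\operatorname{Spec}^h(R)$ is its space of homogeneous primes with Zariski topology. A tightening consists of such an $R$, a surjective homomorphism $\pi\colon G\to K_0(\mathcal G)$,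 representatives $g_\gamma$ for $\gamma\in K_0(\mathcal G)$ with $g_1=\mathbb 1$, and group isomorphisms $\varphi_x\colon R_x\to\mathcal R(\mathbb 1,g_{\pi(x)})$ such that: (1) $\varphi_x(rs)=\varphi_x(r)\circ\varphi_1(s)$ for $s\in R_1$, $r\in R_x$; (2) for $r\in R_x$, $s\in R_y$, the morphism $(\varphi_x(r)\otimes g_{\pi(y)})\circ\varphi_y(s)$ (with implicit unitor) is a translate of $\varphi_{xy}(rs)$. Write $\varphi=\bigsqcup_x\varphi_x$ on homogeneous elements. For a homogeneous ideal $\mathcal I$ of $\mathcal R$, $\mathrm r(\mathcal I)$ is the additive closure in $R$ of $\varphi^{-1}(\mathcal I)$; for a homogeneous ideal $I$ of $R$, $\mathrm e(I)$ is the homogeneous ideal of $\mathcal R$ generated by $\varphi$ of the homogeneous elements of $I$. *)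

theory Defs
  imports "HOL-Analysis.Abstract_Topology"
begin

text \<open>A (small) preadditive symmetric monoidal category, presented concretely:
  objects of type 'o, morphisms of type 'm.  cmp g f is the composite g after f.\<close>

record ('o, 'm) two_ring =
  obj   :: "'o set"
  arr   :: "'m set"
  src   :: "'m \<Rightarrow> 'o"
  tgt   :: "'m \<Rightarrow> 'o"
  cmp   :: "'m \<Rightarrow> 'm \<Rightarrow> 'm"
  idm   :: "'o \<Rightarrow> 'm"
  madd  :: "'m \<Rightarrow> 'm \<Rightarrow> 'm"
  mzero :: "'o \<Rightarrow> 'o \<Rightarrow> 'm"
  mneg  :: "'m \<Rightarrow> 'm"
  tobj  :: "'o \<Rightarrow> 'o \<Rightarrow> 'o"
  tmor  :: "'m \<Rightarrow> 'm \<Rightarrow> 'm"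
  uobj  :: "'o"
  assc  :: "'o \<Rightarrow> 'o \<Rightarrow> 'o \<Rightarrow> 'm"
  lun   :: "'o \<Rightarrow> 'm"
  run   :: "'o \<Rightarrow> 'm"
  brd   :: "'o \<Rightarrow> 'o \<Rightarrow> 'm"

definition hom :: "('o, 'm, 'z) two_ring_scheme \<Rightarrow> 'o \<Rightarrow> 'o \<Rightarrow> 'm set" where
  "hom C a b = {f \<in> arr C. src C f = a \<and> tgt C f = b}"

definition iso_arr :: "('o, 'm, 'z) two_ring_scheme \<Rightarrow> 'm \<Rightarrow> bool" where
  "iso_arr C f \<longleftrightarrow> f \<in> arr C \<and> (\<exists>g \<in> hom C (tgt C f) (src C f).
      cmp C g f = idm C (src C f) \<and> cmp C f g = idm C (tgt C f))"

definition inv_arr :: "('o, 'm, 'z) two_ring_scheme \<Rightarrow> 'm \<Rightarrow> 'm" where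
  "inv_arr C f = (SOME g. g \<in> hom C (tgt C f) (src C f) \<and>
      cmp C g f = idm C (src C f) \<and> cmp C f g = idm C (tgt C f))"

definition isomorphic :: "('o, 'm, 'z) two_ring_scheme \<Rightarrow> 'o \<Rightarrow> 'o \<Rightarrow> bool" where
  "isomorphic C a b \<longleftrightarrow> (\<exists>u \<in> hom C a b. iso_arr C u)"

locale graded_comm_2ring =
  fixes C :: "('o, 'm, 'z) two_ring_scheme"
  assumes arr_src: "f \<in> arr C \<Longrightarrow> src C f \<in> obj C"
    and arr_tgt: "f \<in> arr C \<Longrightarrow> tgt C f \<in> obj C"
    and idm_hom: "a \<in> obj C \<Longrightarrow> idm C a \<in> hom C a a"
    and cmp_hom: "f \<in> hom C a b \<Longrightarrow> g \<in> hom C b c \<Longrightarrow> cmp C g f \<in> hom C a c"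
    and idm_left: "f \<in> hom C a b \<Longrightarrow> cmp C (idm C b) f = f"
    and idm_right: "f \<in> hom C a b \<Longrightarrow> cmp C f (idm C a) = f"
    and cmp_assoc: "f \<in> hom C a b \<Longrightarrow> g \<in> hom C b c \<Longrightarrow> h \<in> hom C c d \<Longrightarrow>
        cmp C h (cmp C g f) = cmp C (cmp C h g) f"
    and madd_hom: "f \<in> hom C a b \<Longrightarrow> g \<in> hom C a b \<Longrightarrow> madd C f g \<in> hom C a b"
    and mzero_hom: "a \<in> obj C \<Longrightarrow> b \<in> obj C \<Longrightarrow> mzero C a b \<in> hom C a b"
    and mneg_hom: "f \<in> hom C a b \<Longrightarrow> mneg C f \<in> hom C a b"
    and madd_assoc: "f \<in> hom C a b \<Longrightarrow> g \<in> hom C a b \<Longrightarrow> h \<in> hom C a b \<Longrightarrow>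
        madd C (madd C f g) h = madd C f (madd C g h)"
    and madd_comm: "f \<in> hom C a b \<Longrightarrow> g \<in> hom C a b \<Longrightarrow> madd C f g = madd C g f"
    and madd_zero: "f \<in> hom C a b \<Longrightarrow> madd C f (mzero C a b) = f"
    and madd_neg: "f \<in> hom C a b \<Longrightarrow> madd C f (mneg C f) = mzero C a b"
    and cmp_madd_left: "f \<in> hom C a b \<Longrightarrow> g \<in> hom C b c \<Longrightarrow> g' \<in> hom C b c \<Longrightarrow>
        cmp C (madd C g g') f = madd C (cmp C g f) (cmp C g' f)"
    and cmp_madd_right: "f \<in> hom C a b \<Longrightarrow> f' \<in> hom C a b \<Longrightarrow> g \<in> hom C b c \<Longrightarrow>
        cmp C g (madd C f f') = madd C (cmp C g f) (cmp C g f')"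
    and tobj_obj: "a \<in> obj C \<Longrightarrow> b \<in> obj C \<Longrightarrow> tobj C a b \<in> obj C"
    and tmor_hom: "f \<in> hom C a b \<Longrightarrow> g \<in> hom C c d \<Longrightarrow>
        tmor C f g \<in> hom C (tobj C a c) (tobj C b d)"
    and tmor_idm: "a \<in> obj C \<Longrightarrow> b \<in> obj C \<Longrightarrow>
        tmor C (idm C a) (idm C b) = idm C (tobj C a b)"
    and tmor_cmp: "f \<in> hom C a b \<Longrightarrow> f' \<in> hom C b c \<Longrightarrow> g \<in> hom C d e \<Longrightarrow> g' \<in> hom C e k \<Longrightarrow>
        tmor C (cmp C f' f) (cmp C g' g) = cmp C (tmor C f' g') (tmor C f g)"
    and tmor_madd_left: "f \<in> hom C a b \<Longrightarrow> f' \<in> hom C a b \<Longrightarrow> g \<in> hom C c d \<Longrightarrow>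
        tmor C (madd C f f') g = madd C (tmor C f g) (tmor C f' g)"
    and tmor_madd_right: "f \<in> hom C a b \<Longrightarrow> g \<in> hom C c d \<Longrightarrow> g' \<in> hom C c d \<Longrightarrow>
        tmor C f (madd C g g') = madd C (tmor C f g) (tmor C f g')"
    and uobj_obj: "uobj C \<in> obj C"
    and assc_hom: "a \<in> obj C \<Longrightarrow> b \<in> obj C \<Longrightarrow> c \<in> obj C \<Longrightarrow>
        assc C a b c \<in> hom C (tobj C (tobj C a b) c) (tobj C a (tobj C b c))"
    and assc_iso: "a \<in> obj C \<Longrightarrow> b \<in> obj C \<Longrightarrow> c \<in> obj C \<Longrightarrow> iso_arr C (assc C a b c)"
    and assc_nat: "f \<in> hom C a a' \<Longrightarrow> g \<in> hom C b b' \<Longrightarrow> h \<in> hom C c c' \<Longrightarrow>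
        cmp C (assc C a' b' c') (tmor C (tmor C f g) h)
          = cmp C (tmor C f (tmor C g h)) (assc C a b c)"
    and lun_hom: "a \<in> obj C \<Longrightarrow> lun C a \<in> hom C (tobj C (uobj C) a) a"
    and lun_iso: "a \<in> obj C \<Longrightarrow> iso_arr C (lun C a)"
    and lun_nat: "f \<in> hom C a b \<Longrightarrow>
        cmp C (lun C b) (tmor C (idm C (uobj C)) f) = cmp C f (lun C a)"
    and run_hom: "a \<in> obj C \<Longrightarrow> run C a \<in> hom C (tobj C a (uobj C)) a"
    and run_iso: "a \<in> obj C \<Longrightarrow> iso_arr C (run C a)"
    and run_nat: "f \<in> hom C a b \<Longrightarrow>
        cmp C (run C b) (tmor C f (idm C (uobj C))) = cmp C f (run C a)"
    and brd_hom: "a \<in> obj C \<Longrightarrow> b \<in> obj C \<Longrightarrow> brd C a b \<in> hom C (tobj C a b) (tobj C b a)"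
    and brd_nat: "f \<in> hom C a a' \<Longrightarrow> g \<in> hom C b b' \<Longrightarrow>
        cmp C (brd C a' b') (tmor C f g) = cmp C (tmor C g f) (brd C a b)"
    and brd_sym: "a \<in> obj C \<Longrightarrow> b \<in> obj C \<Longrightarrow>
        cmp C (brd C b a) (brd C a b) = idm C (tobj C a b)"
    and pentagon: "a \<in> obj C \<Longrightarrow> b \<in> obj C \<Longrightarrow> c \<in> obj C \<Longrightarrow> d \<in> obj C \<Longrightarrow>
        cmp C (assc C a b (tobj C c d)) (assc C (tobj C a b) c d)
          = cmp C (tmor C (idm C a) (assc C b c d))
              (cmp C (assc C a (tobj C b c) d) (tmor C (assc C a b c) (idm C d)))"
    and triangle: "a \<in> obj C \<Longrightarrow> b \<in> obj C \<Longrightarrow>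
        cmp C (tmor C (idm C a) (lun C b)) (assc C a (uobj C) b) = tmor C (run C a) (idm C b)"
    and hexagon: "a \<in> obj C \<Longrightarrow> b \<in> obj C \<Longrightarrow> c \<in> obj C \<Longrightarrow>
        cmp C (assc C b c a) (cmp C (brd C a (tobj C b c)) (assc C a b c))
          = cmp C (tmor C (idm C b) (brd C a c))
              (cmp C (assc C b a c) (tmor C (brd C a b) (idm C c)))"
    and invertible: "a \<in> obj C \<Longrightarrow> \<exists>b \<in> obj C. isomorphic C (tobj C a b) (uobj C)"

definition iso_class :: "('o, 'm, 'z) two_ring_scheme \<Rightarrow> 'o \<Rightarrow> 'o set" where
  "iso_class C a = {b \<in> obj C. isomorphic C a b}"

definition K0 :: "('o, 'm, 'z) two_ring_scheme \<Rightarrow> 'o set set" where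
  "K0 C = iso_class C ` obj C"

definition translate :: "('o, 'm, 'z) two_ring_scheme \<Rightarrow> 'm \<Rightarrow> 'm \<Rightarrow> bool" where
  "translate C t r \<longleftrightarrow> (\<exists>g \<in> obj C. \<exists>u v.
      u \<in> hom C (src C t) (tobj C g (src C r)) \<and> iso_arr C u \<and>
      v \<in> hom C (tobj C g (tgt C r)) (tgt C t) \<and> iso_arr C v \<and>
      t = cmp C v (cmp C (tmor C (idm C g) r) u))"

definition hideal_2r :: "('o, 'm, 'z) two_ring_scheme \<Rightarrow> 'm set \<Rightarrow> bool" where
  "hideal_2r C I \<longleftrightarrow> I \<subseteq> arr C
    \<and> (\<forall>a \<in> obj C. \<forall>b \<in> obj C. mzero C a b \<in> I)
    \<and> (\<forall>a b f g. f \<in> I \<inter> hom C a b \<longrightarrow> g \<in> I \<inter> hom C a b \<longrightarrow> madd C f g \<in> I)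
    \<and> (\<forall>f \<in> I. mneg C f \<in> I)
    \<and> (\<forall>f \<in> I. \<forall>g \<in> arr C. src C g = tgt C f \<longrightarrow> cmp C g f \<in> I)
    \<and> (\<forall>f \<in> I. \<forall>h \<in> arr C. tgt C h = src C f \<longrightarrow> cmp C f h \<in> I)
    \<and> (\<forall>f \<in> I. \<forall>a \<in> obj C. tmor C (idm C a) f \<in> I \<and> tmor C f (idm C a) \<in> I)"

definition prime_2r :: "('o, 'm, 'z) two_ring_scheme \<Rightarrow> 'm set \<Rightarrow> bool" where
  "prime_2r C P \<longleftrightarrow> hideal_2r C P \<and> P \<noteq> arr C
    \<and> (\<forall>r \<in> arr C. \<forall>s \<in> arr C. src C s = tgt C r \<longrightarrow> cmp C s r \<in> P \<longrightarrow> s \<in> P \<or> r \<in> P)"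

definition Spc :: "('o, 'm, 'z) two_ring_scheme \<Rightarrow> 'm set topology" where
  "Spc C = topology_generated_by
     {{P. prime_2r C P \<and> \<not> S \<subseteq> P} | S. S \<subseteq> arr C}"

text \<open>The ring is the whole type 'r; the grading group G is the whole type 'g, written
  additively (so the neutral element 1 of the paper is 0 here).  Rx x is the
  homogeneous component of degree x.\<close>

definition hdecomp :: "('g \<Rightarrow> 'r::ring_1 set) \<Rightarrow> 'r \<Rightarrow> ('g \<Rightarrow> 'r) \<Rightarrow> bool" where
  "hdecomp Rx r f \<longleftrightarrow> (\<forall>y. f y \<in> Rx y) \<and> finite {y. f y \<noteq> 0} \<and> r = (\<Sum>y \<in> {y. f y \<noteq> 0}. f y)"

definition hcomp :: "('g \<Rightarrow> 'r::ring_1 set) \<Rightarrow> 'g \<Rightarrow> 'r \<Rightarrow> 'r" where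
  "hcomp Rx x r = (THE f. hdecomp Rx r f) x"

definition add_subgroup :: "'r::ring_1 set \<Rightarrow> bool" where
  "add_subgroup A \<longleftrightarrow> 0 \<in> A \<and> (\<forall>a \<in> A. \<forall>b \<in> A. a + b \<in> A) \<and> (\<forall>a \<in> A. - a \<in> A)"

locale graded_comm_ring =
  fixes Rx :: "'g::ab_group_add \<Rightarrow> 'r::ring_1 set"
    and tau :: "'g \<Rightarrow> 'g \<Rightarrow> 'r"
  assumes Rx_subgroup: "add_subgroup (Rx x)"
    and direct_sum: "\<exists>!f. hdecomp Rx r f"
    and one_deg: "1 \<in> Rx 0"
    and Rx_mult: "r \<in> Rx x \<Longrightarrow> s \<in> Rx y \<Longrightarrow> r * s \<in> Rx (x + y)"
    and tau_deg: "tau x y \<in> Rx 0"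
    and tau_central: "tau x y * r = r * tau x y"
    and tau_unit: "\<exists>u. tau x y * u = 1 \<and> u * tau x y = 1"
    and tau_sym: "tau x y = tau y x"
    and tau_bilinear: "tau (x + x') y = tau x y * tau x' y"
    and graded_comm: "r \<in> Rx x \<Longrightarrow> s \<in> Rx y \<Longrightarrow> r * s = tau x y * (s * r)"

definition hideal_gr :: "('g \<Rightarrow> 'r::ring_1 set) \<Rightarrow> 'r set \<Rightarrow> bool" where
  "hideal_gr Rx I \<longleftrightarrow> add_subgroup I
    \<and> (\<forall>r \<in> I. \<forall>a. a * r \<in> I \<and> r * a \<in> I)
    \<and> (\<forall>r \<in> I. \<forall>x. hcomp Rx x r \<in> I)"

definition hprime_gr :: "('g \<Rightarrow> 'r::ring_1 set) \<Rightarrow> 'r set \<Rightarrow> bool" where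
  "hprime_gr Rx P \<longleftrightarrow> hideal_gr Rx P \<and> P \<noteq> UNIV
    \<and> (\<forall>x y r s. r \<in> Rx x \<longrightarrow> s \<in> Rx y \<longrightarrow> r * s \<in> P \<longrightarrow> r \<in> P \<or> s \<in> P)"

definition Spec_h :: "('g \<Rightarrow> 'r::ring_1 set) \<Rightarrow> 'r set topology" where
  "Spec_h Rx = topology_generated_by {{P. hprime_gr Rx P \<and> \<not> S \<subseteq> P} | S. True}"

locale tightening = graded_comm_2ring C + graded_comm_ring Rx tau
  for C :: "('o, 'm, 'z) two_ring_scheme"
    and Rx :: "'g::ab_group_add \<Rightarrow> 'r::ring_1 set"
    and tau :: "'g \<Rightarrow> 'g \<Rightarrow> 'r" +
  fixes pi :: "'g \<Rightarrow> 'o set"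
    and gr :: "'o set \<Rightarrow> 'o"
    and phi :: "'g \<Rightarrow> 'r \<Rightarrow> 'm"
  assumes pi_K0: "pi x \<in> K0 C"
    and pi_hom: "a \<in> pi x \<Longrightarrow> b \<in> pi y \<Longrightarrow> pi (x + y) = iso_class C (tobj C a b)"
    and pi_surj: "pi ` UNIV = K0 C"
    and gr_rep: "\<gamma> \<in> K0 C \<Longrightarrow> gr \<gamma> \<in> \<gamma>"
    and gr_unit: "gr (iso_class C (uobj C)) = uobj C"
    and phi_bij: "bij_betw (phi x) (Rx x) (hom C (uobj C) (gr (pi x)))"
    and phi_add: "r \<in> Rx x \<Longrightarrow> s \<in> Rx x \<Longrightarrow> phi x (r + s) = madd C (phi x r) (phi x s)"
    and phi_mult_deg0: "r \<in> Rx x \<Longrightarrow> s \<in> Rx 0 \<Longrightarrow> phi x (r * s) = cmp C (phi x r) (phi 0 s)"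
    and phi_mult: "r \<in> Rx x \<Longrightarrow> s \<in> Rx y \<Longrightarrow>
        translate C
          (cmp C (tmor C (phi x r) (idm C (gr (pi y))))
             (cmp C (inv_arr C (lun C (gr (pi y)))) (phi y s)))
          (phi (x + y) (r * s))"

definition restr :: "('g \<Rightarrow> 'r::ring_1 set) \<Rightarrow> ('g \<Rightarrow> 'r \<Rightarrow> 'm) \<Rightarrow> 'm set \<Rightarrow> 'r set" where
  "restr Rx phi I = \<Inter>{A. add_subgroup A \<and> {r. \<exists>x. r \<in> Rx x \<and> phi x r \<in> I} \<subseteq> A}"

definition extn :: "('o, 'm, 'z) two_ring_scheme \<Rightarrow> ('g \<Rightarrow> 'r::ring_1 set) \<Rightarrow> ('g \<Rightarrow> 'r \<Rightarrow> 'm)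
    \<Rightarrow> 'r set \<Rightarrow> 'm set" where
  "extn C Rx phi I = \<Inter>{J. hideal_2r C J \<and> {phi x r | x r. r \<in> Rx x \<and> r \<in> I} \<subseteq> J}"

end

theory Submission
  imports Defs
begin


context graded_comm_2ring begin

lemma hom_iff: "f \<in> hom C a b \<longleftrightarrow> f \<in> arr C \<and> src C f = a \<and> tgt C f = b"
  by (simp add: hom_def)

lemma arr_hom: "f \<in> arr C \<Longrightarrow> f \<in> hom C (src C f) (tgt C f)"
  by (simp add: hom_def)

lemma src_obj[simp]: "f \<in> arr C \<Longrightarrow> src C f \<in> obj C" using arr_src .
lemma tgt_obj[simp]: "f \<in> arr C \<Longrightarrow> tgt C f \<in> obj C" using arr_tgt .
lemma tobj_obj'[simp]: "a \<in> obj C \<Longrightarrow> b \<in> obj C \<Longrightarrow> tobj C a b \<in> obj C" using tobj_obj .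
lemma uobj_obj'[simp]: "uobj C \<in> obj C" using uobj_obj .

lemma idm_arr[simp]: "a \<in> obj C \<Longrightarrow> idm C a \<in> arr C"
  and src_idm[simp]: "a \<in> obj C \<Longrightarrow> src C (idm C a) = a"
  and tgt_idm[simp]: "a \<in> obj C \<Longrightarrow> tgt C (idm C a) = a"
  using idm_hom[of a] by (auto simp: hom_iff)

lemma cmp_arr[simp]: "f \<in> arr C \<Longrightarrow> g \<in> arr C \<Longrightarrow> src C g = tgt C f \<Longrightarrow> cmp C g f \<in> arr C"
  and src_cmp[simp]: "f \<in> arr C \<Longrightarrow> g \<in> arr C \<Longrightarrow> src C g = tgt C f \<Longrightarrow> src C (cmp C g f) = src C f"
  and tgt_cmp[simp]: "f \<in> arr C \<Longrightarrow> g \<in> arr C \<Longrightarrow> src C g = tgt C f \<Longrightarrow> tgt C (cmp C g f) = tgt C g"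
  using cmp_hom[OF arr_hom[of f], of g "tgt C g"] by (auto simp: hom_iff)

lemma tmor_arr[simp]: "f \<in> arr C \<Longrightarrow> g \<in> arr C \<Longrightarrow> tmor C f g \<in> arr C"
  and src_tmor[simp]: "f \<in> arr C \<Longrightarrow> g \<in> arr C \<Longrightarrow> src C (tmor C f g) = tobj C (src C f) (src C g)"
  and tgt_tmor[simp]: "f \<in> arr C \<Longrightarrow> g \<in> arr C \<Longrightarrow> tgt C (tmor C f g) = tobj C (tgt C f) (tgt C g)"
  using tmor_hom[OF arr_hom[of f] arr_hom[of g]] by (auto simp: hom_iff)

lemma madd_arr[simp]: "f \<in> arr C \<Longrightarrow> g \<in> arr C \<Longrightarrow> src C g = src C f \<Longrightarrow> tgt C g = tgt C f \<Longrightarrow> madd C f g \<in> arr C"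
  and src_madd[simp]: "f \<in> arr C \<Longrightarrow> g \<in> arr C \<Longrightarrow> src C g = src C f \<Longrightarrow> tgt C g = tgt C f \<Longrightarrow> src C (madd C f g) = src C f"
  and tgt_madd[simp]: "f \<in> arr C \<Longrightarrow> g \<in> arr C \<Longrightarrow> src C g = src C f \<Longrightarrow> tgt C g = tgt C f \<Longrightarrow> tgt C (madd C f g) = tgt C f"
  using madd_hom[OF arr_hom[of f], of g] by (auto simp: hom_iff)

lemma lun_arr[simp]: "a \<in> obj C \<Longrightarrow> lun C a \<in> arr C"
  and src_lun[simp]: "a \<in> obj C \<Longrightarrow> src C (lun C a) = tobj C (uobj C) a"
  and tgt_lun[simp]: "a \<in> obj C \<Longrightarrow> tgt C (lun C a) = a"
  using lun_hom[of a] by (auto simp: hom_iff)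

lemma run_arr[simp]: "a \<in> obj C \<Longrightarrow> run C a \<in> arr C"
  and src_run[simp]: "a \<in> obj C \<Longrightarrow> src C (run C a) = tobj C a (uobj C)"
  and tgt_run[simp]: "a \<in> obj C \<Longrightarrow> tgt C (run C a) = a"
  using run_hom[of a] by (auto simp: hom_iff)

lemma brd_arr[simp]: "a \<in> obj C \<Longrightarrow> b \<in> obj C \<Longrightarrow> brd C a b \<in> arr C"
  and src_brd[simp]: "a \<in> obj C \<Longrightarrow> b \<in> obj C \<Longrightarrow> src C (brd C a b) = tobj C a b"
  and tgt_brd[simp]: "a \<in> obj C \<Longrightarrow> b \<in> obj C \<Longrightarrow> tgt C (brd C a b) = tobj C b a"
  using brd_hom[of a b] by (auto simp: hom_iff)

lemma assc_arr[simp]: "a \<in> obj C \<Longrightarrow> b \<in> obj C \<Longrightarrow> c \<in> obj C \<Longrightarrow> assc C a b c \<in> arr C"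
  and src_assc[simp]: "a \<in> obj C \<Longrightarrow> b \<in> obj C \<Longrightarrow> c \<in> obj C \<Longrightarrow> src C (assc C a b c) = tobj C (tobj C a b) c"
  and tgt_assc[simp]: "a \<in> obj C \<Longrightarrow> b \<in> obj C \<Longrightarrow> c \<in> obj C \<Longrightarrow> tgt C (assc C a b c) = tobj C a (tobj C b c)"
  using assc_hom[of a b c] by (auto simp: hom_iff)

lemma cmp_assoc': "f \<in> arr C \<Longrightarrow> g \<in> arr C \<Longrightarrow> h \<in> arr C \<Longrightarrow> src C g = tgt C f \<Longrightarrow> src C h = tgt C g \<Longrightarrow>
   cmp C (cmp C h g) f = cmp C h (cmp C g f)"
  using cmp_assoc[OF arr_hom[of f], of g "tgt C g" h "tgt C h"] by (auto simp: hom_iff)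

lemma idl[simp]: "f \<in> arr C \<Longrightarrow> tgt C f = b \<Longrightarrow> cmp C (idm C b) f = f"
  using idm_left[OF arr_hom[of f]] by auto
lemma idr[simp]: "f \<in> arr C \<Longrightarrow> src C f = a \<Longrightarrow> cmp C f (idm C a) = f"
  using idm_right[OF arr_hom[of f]] by auto

lemma tmor_cmp': "f \<in> arr C \<Longrightarrow> f' \<in> arr C \<Longrightarrow> g \<in> arr C \<Longrightarrow> g' \<in> arr C \<Longrightarrow>
   src C f' = tgt C f \<Longrightarrow> src C g' = tgt C g \<Longrightarrow>
   tmor C (cmp C f' f) (cmp C g' g) = cmp C (tmor C f' g') (tmor C f g)"
  using tmor_cmp[of f "src C f" "tgt C f" f' "tgt C f'" g "src C g" "tgt C g" g' "tgt C g'"] by (auto simp: hom_iff)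

lemma tmor_idm'[simp]: "a \<in> obj C \<Longrightarrow> b \<in> obj C \<Longrightarrow> tmor C (idm C a) (idm C b) = idm C (tobj C a b)"
  using tmor_idm .

lemma iso_arr_arr[simp]: "iso_arr C u \<Longrightarrow> u \<in> arr C"
  by (simp add: iso_arr_def)

lemma inv_props:
  assumes "iso_arr C u"
  shows "inv_arr C u \<in> arr C \<and> src C (inv_arr C u) = tgt C u \<and> tgt C (inv_arr C u) = src C u \<and>
    cmp C (inv_arr C u) u = idm C (src C u) \<and> cmp C u (inv_arr C u) = idm C (tgt C u)"
proof -
  from assms obtain g where "g \<in> hom C (tgt C u) (src C u) \<and>
      cmp C g u = idm C (src C u) \<and> cmp C u g = idm C (tgt C u)" unfolding iso_arr_def by blast
  then have "inv_arr C u \<in> hom C (tgt C u) (src C u) \<and>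
      cmp C (inv_arr C u) u = idm C (src C u) \<and> cmp C u (inv_arr C u) = idm C (tgt C u)"
    unfolding inv_arr_def by (rule someI)
  then show ?thesis by (auto simp: hom_iff)
qed

lemma inv_arr[simp]: "iso_arr C u \<Longrightarrow> inv_arr C u \<in> arr C"
  and src_inv[simp]: "iso_arr C u \<Longrightarrow> src C (inv_arr C u) = tgt C u"
  and tgt_inv[simp]: "iso_arr C u \<Longrightarrow> tgt C (inv_arr C u) = src C u"
  and inv_l[simp]: "iso_arr C u \<Longrightarrow> cmp C (inv_arr C u) u = idm C (src C u)"
  and inv_r[simp]: "iso_arr C u \<Longrightarrow> cmp C u (inv_arr C u) = idm C (tgt C u)"
  using inv_props by auto

lemma inv_l'[simp]: "iso_arr C u \<Longrightarrow> f \<in> arr C \<Longrightarrow> tgt C f = src C u \<Longrightarrow> cmp C (inv_arr C u) (cmp C u f) = f"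
  by (simp flip: cmp_assoc')
lemma inv_r'[simp]: "iso_arr C u \<Longrightarrow> f \<in> arr C \<Longrightarrow> tgt C f = tgt C u \<Longrightarrow> cmp C u (cmp C (inv_arr C u) f) = f"
  by (simp flip: cmp_assoc')

lemma iso_inv[simp]: "iso_arr C u \<Longrightarrow> iso_arr C (inv_arr C u)"
  unfolding iso_arr_def[of C "inv_arr C u"] by (auto simp: hom_iff intro!: bexI[of _ u])

lemma iso_idm[simp]: "a \<in> obj C \<Longrightarrow> iso_arr C (idm C a)"
  unfolding iso_arr_def by (auto simp: hom_iff intro!: bexI[of _ "idm C a"])

lemma iso_cmp[simp]: "iso_arr C u \<Longrightarrow> iso_arr C v \<Longrightarrow> src C v = tgt C u \<Longrightarrow> iso_arr C (cmp C v u)"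
  unfolding iso_arr_def[of C "cmp C v u"]
  apply (auto simp: hom_iff intro!: bexI[of _ "cmp C (inv_arr C u) (inv_arr C v)"])
  apply (simp_all add: cmp_assoc')
  done


lemma iso_tmor[simp]: "iso_arr C u \<Longrightarrow> iso_arr C v \<Longrightarrow> iso_arr C (tmor C u v)"
  unfolding iso_arr_def[of C "tmor C u v"]
  apply (auto simp: hom_iff intro!: bexI[of _ "tmor C (inv_arr C u) (inv_arr C v)"])
  apply (simp_all flip: tmor_cmp')
  done

lemma iso_lun[simp]: "a \<in> obj C \<Longrightarrow> iso_arr C (lun C a)" using lun_iso .
lemma iso_run[simp]: "a \<in> obj C \<Longrightarrow> iso_arr C (run C a)" using run_iso .
lemma iso_assc[simp]: "a \<in> obj C \<Longrightarrow> b \<in> obj C \<Longrightarrow> c \<in> obj C \<Longrightarrow> iso_arr C (assc C a b c)" using assc_iso .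
lemma iso_brd[simp]: "a \<in> obj C \<Longrightarrow> b \<in> obj C \<Longrightarrow> iso_arr C (brd C a b)"
  unfolding iso_arr_def[of C "brd C a b"]
  by (auto simp: hom_iff brd_sym intro!: bexI[of _ "brd C b a"])

lemma lun_nat': "f \<in> arr C \<Longrightarrow> cmp C (lun C (tgt C f)) (tmor C (idm C (uobj C)) f) = cmp C f (lun C (src C f))"
  using lun_nat[OF arr_hom[of f]] .
lemma run_nat': "f \<in> arr C \<Longrightarrow> cmp C (run C (tgt C f)) (tmor C f (idm C (uobj C))) = cmp C f (run C (src C f))"
  using run_nat[OF arr_hom[of f]] .
lemma brd_nat': "f \<in> arr C \<Longrightarrow> g \<in> arr C \<Longrightarrow> cmp C (brd C (tgt C f) (tgt C g)) (tmor C f g) = cmp C (tmor C g f) (brd C (src C f) (src C g))"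
  using brd_nat[OF arr_hom[of f] arr_hom[of g]] .
lemma assc_nat': "f \<in> arr C \<Longrightarrow> g \<in> arr C \<Longrightarrow> h \<in> arr C \<Longrightarrow>
   cmp C (assc C (tgt C f) (tgt C g) (tgt C h)) (tmor C (tmor C f g) h) = cmp C (tmor C f (tmor C g h)) (assc C (src C f) (src C g) (src C h))"
  using assc_nat[OF arr_hom[of f] arr_hom[of g] arr_hom[of h]] .

lemma iso_move_left: "iso_arr C v \<Longrightarrow> f \<in> arr C \<Longrightarrow> h \<in> arr C \<Longrightarrow> tgt C f = src C v \<Longrightarrow>
   cmp C v f = h \<Longrightarrow> f = cmp C (inv_arr C v) h"
  by (drule sym) simp
lemma iso_move_right: "iso_arr C u \<Longrightarrow> f \<in> arr C \<Longrightarrow> h \<in> arr C \<Longrightarrow> src C f = tgt C u \<Longrightarrow>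
   cmp C f u = h \<Longrightarrow> f = cmp C h (inv_arr C u)"
  by (drule sym) (simp add: cmp_assoc')

lemma iso_cancel_left: "iso_arr C v \<Longrightarrow> f \<in> arr C \<Longrightarrow> f' \<in> arr C \<Longrightarrow> tgt C f = src C v \<Longrightarrow> tgt C f' = src C v \<Longrightarrow>
   cmp C v f = cmp C v f' \<Longrightarrow> f = f'"
proof -
  assume a: "iso_arr C v" "f \<in> arr C" "f' \<in> arr C" "tgt C f = src C v" "tgt C f' = src C v" "cmp C v f = cmp C v f'"
  have "cmp C (inv_arr C v) (cmp C v f) = cmp C (inv_arr C v) (cmp C v f')" using a(6) by simp
  then show ?thesis using a(1-5) by simp
qed
lemma iso_cancel_right: "iso_arr C u \<Longrightarrow> f \<in> arr C \<Longrightarrow> f' \<in> arr C \<Longrightarrow> src C f = tgt C u \<Longrightarrow> src C f' = tgt C u \<Longrightarrow>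
   cmp C f u = cmp C f' u \<Longrightarrow> f = f'"
proof -
  assume a: "iso_arr C u" "f \<in> arr C" "f' \<in> arr C" "src C f = tgt C u" "src C f' = tgt C u" "cmp C f u = cmp C f' u"
  have "cmp C (cmp C f u) (inv_arr C u) = cmp C (cmp C f' u) (inv_arr C u)" using a(6) by simp
  then show ?thesis using a(1-5) by (simp add: cmp_assoc')
qed

abbreviation lt where "lt g f \<equiv> tmor C (idm C g) f"

lemma lt_cmp: "g \<in> obj C \<Longrightarrow> h \<in> arr C \<Longrightarrow> k \<in> arr C \<Longrightarrow> src C k = tgt C h \<Longrightarrow>
   lt g (cmp C k h) = cmp C (lt g k) (lt g h)"
  using tmor_cmp'[of "idm C g" "idm C g" h k] by simp

lemma lt_idm[simp]: "g \<in> obj C \<Longrightarrow> a \<in> obj C \<Longrightarrow> lt g (idm C a) = idm C (tobj C g a)"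
  by simp

lemma inv_left_obj: "g \<in> obj C \<Longrightarrow> \<exists>g'\<in>obj C. \<exists>e. iso_arr C e \<and> e \<in> hom C (tobj C g' g) (uobj C)"
proof -
  assume g: "g \<in> obj C"
  obtain b u where b: "b \<in> obj C" "u \<in> hom C (tobj C g b) (uobj C)" "iso_arr C u"
    using invertible[OF g] unfolding isomorphic_def by blast
  show ?thesis
    using b g by (intro bexI[of _ b] exI[of _ "cmp C u (brd C b g)"]) (auto simp: hom_iff)
qed

lemma inv_right_obj: "g \<in> obj C \<Longrightarrow> \<exists>g'\<in>obj C. \<exists>e. iso_arr C e \<and> e \<in> hom C (tobj C g g') (uobj C)"
  using invertible unfolding isomorphic_def by blast


lemma cmp_eq_ext: "cmp C A B = cmp C A' B' \<Longrightarrow> A \<in> arr C \<Longrightarrow> B \<in> arr C \<Longrightarrow> A' \<in> arr C \<Longrightarrow> B' \<in> arr C \<Longrightarrow> X \<in> arr C \<Longrightarrow>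
  src C A = tgt C B \<Longrightarrow> src C A' = tgt C B' \<Longrightarrow> src C B = tgt C X \<Longrightarrow> src C B' = tgt C X \<Longrightarrow>
  cmp C A (cmp C B X) = cmp C A' (cmp C B' X)"
  by (simp flip: cmp_assoc')

lemma iso_swap: "iso_arr C u \<Longrightarrow> iso_arr C v \<Longrightarrow> X \<in> arr C \<Longrightarrow> L \<in> arr C \<Longrightarrow>
  src C v = tgt C X \<Longrightarrow> src C L = tgt C u \<Longrightarrow> src C X = src C u \<Longrightarrow>
  cmp C v X = cmp C L u \<Longrightarrow> cmp C (inv_arr C v) L = cmp C X (inv_arr C u)"
proof -
  assume a: "iso_arr C u" "iso_arr C v" "X \<in> arr C" "L \<in> arr C" "src C v = tgt C X" "src C L = tgt C u"
    "src C X = src C u" "cmp C v X = cmp C L u"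
  have "tgt C (cmp C v X) = tgt C (cmp C L u)" using a(8) by simp
  then have tL: "tgt C L = tgt C v" using a(1-7) by simp
  have "cmp C (inv_arr C v) L = cmp C (inv_arr C v) (cmp C (cmp C L u) (inv_arr C u))"
    using a(1-7) tL by (simp add: cmp_assoc')
  also have "\<dots> = cmp C (inv_arr C v) (cmp C (cmp C v X) (inv_arr C u))" using a(8) by simp
  also have "\<dots> = cmp C X (inv_arr C u)" using a(1-7) by (simp add: cmp_assoc')
  finally show ?thesis .
qed

context
  fixes g g' e
  assumes g: "g \<in> obj C" and g': "g' \<in> obj C" and e: "iso_arr C e" "e \<in> hom C (tobj C g' g) (uobj C)"
begin

definition alpha where "alpha a = cmp C (lun C a) (cmp C (tmor C e (idm C a)) (inv_arr C (assc C g' g a)))"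

lemma e_simps[simp]: "e \<in> arr C" "src C e = tobj C g' g" "tgt C e = uobj C"
  using e by (auto simp: hom_iff)

lemma alpha_arr[simp]: "a \<in> obj C \<Longrightarrow> alpha a \<in> arr C"
  and src_alpha[simp]: "a \<in> obj C \<Longrightarrow> src C (alpha a) = tobj C g' (tobj C g a)"
  and tgt_alpha[simp]: "a \<in> obj C \<Longrightarrow> tgt C (alpha a) = a"
  and iso_alpha[simp]: "a \<in> obj C \<Longrightarrow> iso_arr C (alpha a)"
  unfolding alpha_def using g g' e by auto

lemma alpha_nat: assumes h: "h \<in> arr C"
  shows "cmp C (alpha (tgt C h)) (lt g' (lt g h)) = cmp C h (alpha (src C h))"
proof -
  let ?a = "src C h" and ?b = "tgt C h"
  have S1: "cmp C (inv_arr C (assc C g' g ?b)) (lt g' (lt g h)) = cmp C (tmor C (idm C (tobj C g' g)) h) (inv_arr C (assc C g' g ?a))"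
    apply (rule iso_swap)
    using assc_nat'[of "idm C g'" "idm C g" h] g g' h by auto
  have S2: "cmp C (tmor C e (idm C ?b)) (tmor C (idm C (tobj C g' g)) h) = cmp C (lt (uobj C) h) (tmor C e (idm C ?a))"
    using g g' h by (simp flip: tmor_cmp')
  have S3: "cmp C (lun C ?b) (lt (uobj C) h) = cmp C h (lun C ?a)" using lun_nat'[OF h] .
  have "cmp C (alpha ?b) (lt g' (lt g h)) = cmp C (lun C ?b) (cmp C (tmor C e (idm C ?b)) (cmp C (inv_arr C (assc C g' g ?b)) (lt g' (lt g h))))"
    unfolding alpha_def using g g' h by (simp add: cmp_assoc')
  also have "\<dots> = cmp C (lun C ?b) (cmp C (tmor C e (idm C ?b)) (cmp C (tmor C (idm C (tobj C g' g)) h) (inv_arr C (assc C g' g ?a))))"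
    using S1 by simp
  also have "\<dots> = cmp C (lun C ?b) (cmp C (lt (uobj C) h) (cmp C (tmor C e (idm C ?a)) (inv_arr C (assc C g' g ?a))))"
    using S2 g g' h by (subst cmp_eq_ext[OF S2]) auto
  also have "\<dots> = cmp C h (cmp C (lun C ?a) (cmp C (tmor C e (idm C ?a)) (inv_arr C (assc C g' g ?a))))"
    using S3 g g' h by (subst cmp_eq_ext[OF S3]) auto
  also have "\<dots> = cmp C h (alpha ?a)" unfolding alpha_def ..
  finally show ?thesis .
qed

end

lemma lt_faithful: assumes g: "g \<in> obj C" and h: "h \<in> arr C" "h' \<in> arr C" "src C h' = src C h" "tgt C h' = tgt C h"
  and eq: "lt g h = lt g h'" shows "h = h'"
proof -
  obtain g' e where g': "g' \<in> obj C" and e: "iso_arr C e" "e \<in> hom C (tobj C g' g) (uobj C)"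
    using inv_left_obj[OF g] by blast
  have "cmp C h (alpha g g' e (src C h)) = cmp C (alpha g g' e (tgt C h)) (lt g' (lt g h))"
    using alpha_nat[OF g g' e h(1)] by simp
  also have "\<dots> = cmp C (alpha g g' e (tgt C h')) (lt g' (lt g h'))" using eq h(4) by simp
  also have "\<dots> = cmp C h' (alpha g g' e (src C h'))" using alpha_nat[OF g g' e h(2)] by simp
  finally have *: "cmp C h (alpha g g' e (src C h)) = cmp C h' (alpha g g' e (src C h))" using h(3) by simp
  have "src C h \<in> obj C" using h by simp
  then show ?thesis
    using iso_cancel_right[OF iso_alpha[OF g g' e] h(1) h(2) _ _ *] g g' e h by auto
qed

lemma lt_full: assumes g: "g \<in> obj C" and a: "a \<in> obj C" "b \<in> obj C"
  and k: "k \<in> hom C (tobj C g a) (tobj C g b)" shows "\<exists>h\<in>hom C a b. lt g h = k"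
proof -
  obtain g' e where g': "g' \<in> obj C" and e: "iso_arr C e" "e \<in> hom C (tobj C g' g) (uobj C)"
    using inv_left_obj[OF g] by blast
  let ?al = "alpha g g' e"
  have k': "k \<in> arr C" "src C k = tobj C g a" "tgt C k = tobj C g b" using k by (auto simp: hom_iff)
  define h where "h = cmp C (?al b) (cmp C (lt g' k) (inv_arr C (?al a)))"
  have e': "e \<in> arr C" "src C e = tobj C g' g" "tgt C e = uobj C" using e by (auto simp: hom_iff)
  have h: "h \<in> hom C a b" unfolding h_def hom_iff using g g' e e' a k' by simp
  then have h': "h \<in> arr C" "src C h = a" "tgt C h = b" by (auto simp: hom_iff)
  have "cmp C (?al b) (lt g' (lt g h)) = cmp C h (?al a)"
    using alpha_nat[OF g g' e h'(1)] h' by simp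
  also have "\<dots> = cmp C (?al b) (lt g' k)"
    unfolding h_def using g g' e e' a k' by (simp add: cmp_assoc')
  finally have *: "cmp C (?al b) (lt g' (lt g h)) = cmp C (?al b) (lt g' k)" .
  have "lt g' (lt g h) = lt g' k"
    using iso_cancel_left[OF iso_alpha[OF g g' e a(2)] _ _ _ _ *] g g' e a k' h' by simp
  then have "lt g h = k" using lt_faithful[OF g', of "lt g h" k] g g' e a k' h' by simp
  then show ?thesis using h by blast
qed


lemma lt_bij: assumes g: "g \<in> obj C" and a: "a \<in> obj C" "b \<in> obj C"
  shows "bij_betw (lt g) (hom C a b) (hom C (tobj C g a) (tobj C g b))"
proof (rule bij_betwI')
  fix x y assume "x \<in> hom C a b" "y \<in> hom C a b"
  then have "x \<in> arr C" "y \<in> arr C" "src C y = src C x" "tgt C y = tgt C x" by (auto simp: hom_def)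
  then show "(lt g x = lt g y) = (x = y)" using lt_faithful[OF g, of x y] by blast
next
  fix x assume "x \<in> hom C a b"
  then show "lt g x \<in> hom C (tobj C g a) (tobj C g b)" using tmor_hom[OF idm_hom[OF g]] by blast
next
  fix y assume "y \<in> hom C (tobj C g a) (tobj C g b)"
  then show "\<exists>x\<in>hom C a b. y = lt g x" using lt_full[OF g a] by metis
qed



lemma tr_intro: "g \<in> obj C \<Longrightarrow> r \<in> arr C \<Longrightarrow> iso_arr C u \<Longrightarrow> iso_arr C v \<Longrightarrow>
  tgt C u = tobj C g (src C r) \<Longrightarrow> src C v = tobj C g (tgt C r) \<Longrightarrow> translate C (cmp C v (cmp C (lt g r) u)) r"
  unfolding translate_def hom_def mem_Collect_eq by (intro bexI[of _ g] exI[of _ u] exI[of _ v]) simp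

lemma tr_elim: assumes "translate C t r"
  obtains g u v where "g \<in> obj C" "iso_arr C u" "iso_arr C v" "tgt C u = tobj C g (src C r)"
    "src C v = tobj C g (tgt C r)" "src C u = src C t" "tgt C v = tgt C t" "t = cmp C v (cmp C (lt g r) u)"
  using assms unfolding translate_def hom_def by blast

lemma tr_refl: assumes f: "f \<in> arr C" shows "translate C f f"
proof -
  have "f = cmp C (cmp C (lun C (tgt C f)) (lt (uobj C) f)) (inv_arr C (lun C (src C f)))"
    using iso_move_right[OF iso_lun[of "src C f"] f _ _ lun_nat'[OF f, symmetric]] f by simp
  also have "\<dots> = cmp C (lun C (tgt C f)) (cmp C (lt (uobj C) f) (inv_arr C (lun C (src C f))))"
    using f by (simp add: cmp_assoc')
  finally have *: "f = \<dots>" .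
  have "translate C (cmp C (lun C (tgt C f)) (cmp C (lt (uobj C) f) (inv_arr C (lun C (src C f))))) f"
    using f by (intro tr_intro) auto
  then show ?thesis using * by simp
qed

lemma tr_iso: assumes t: "translate C t r" and r: "r \<in> arr C" and w: "iso_arr C w" "iso_arr C w'"
  and ty: "src C w = tgt C t" "tgt C w' = src C t"
  shows "translate C (cmp C w (cmp C t w')) r"
proof -
  obtain g u v where g: "g \<in> obj C" "iso_arr C u" "iso_arr C v" "tgt C u = tobj C g (src C r)"
    "src C v = tobj C g (tgt C r)" "src C u = src C t" "tgt C v = tgt C t" and te: "t = cmp C v (cmp C (lt g r) u)"
    using tr_elim[OF t] by blast
  have "cmp C w (cmp C t w') = cmp C (cmp C w v) (cmp C (lt g r) (cmp C u w'))"
    unfolding te using g r w ty by (simp add: cmp_assoc')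
  moreover have "translate C (cmp C (cmp C w v) (cmp C (lt g r) (cmp C u w'))) r"
    using g r w ty by (intro tr_intro) auto
  ultimately show ?thesis by simp
qed

lemma tr_lt: "g \<in> obj C \<Longrightarrow> f \<in> arr C \<Longrightarrow> translate C (lt g f) f"
  using tr_intro[of g f "idm C (tobj C g (src C f))" "idm C (tobj C g (tgt C f))"] by simp

lemma tr_rt: assumes g: "g \<in> obj C" and f: "f \<in> arr C" shows "translate C (tmor C f (idm C g)) f"
proof -
  have "tmor C f (idm C g) = cmp C (inv_arr C (brd C (tgt C f) g)) (cmp C (lt g f) (brd C (src C f) g))"
  proof -
    have nat: "cmp C (brd C (tgt C f) g) (tmor C f (idm C g)) = cmp C (lt g f) (brd C (src C f) g)"
      using brd_nat'[OF f idm_arr[OF g]] g by simp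
    show ?thesis using iso_move_left[OF _ _ _ _ nat] f g by simp
  qed
  moreover have "translate C (cmp C (inv_arr C (brd C (tgt C f) g)) (cmp C (lt g f) (brd C (src C f) g))) f"
    using f g by (intro tr_iso tr_lt) auto
  ultimately show ?thesis by simp
qed

lemma lt_lt: assumes g: "g \<in> obj C" "g' \<in> obj C" and m: "m \<in> arr C"
  shows "lt g (lt g' m) = cmp C (assc C g g' (tgt C m)) (cmp C (lt (tobj C g g') m) (inv_arr C (assc C g g' (src C m))))"
proof -
  have "cmp C (lt g (lt g' m)) (assc C g g' (src C m)) = cmp C (assc C g g' (tgt C m)) (lt (tobj C g g') m)"
    using assc_nat'[of "idm C g" "idm C g'" m] g m by simp
  from iso_move_right[OF _ _ _ _ this] show ?thesis using g m by (simp add: cmp_assoc')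
qed

lemma tr_trans: assumes t1: "translate C f k" and t2: "translate C k m" and m: "m \<in> arr C"
  shows "translate C f m"
proof -
  obtain g' u' v' where g': "g' \<in> obj C" "iso_arr C u'" "iso_arr C v'" "tgt C u' = tobj C g' (src C m)"
    "src C v' = tobj C g' (tgt C m)" "src C u' = src C k" "tgt C v' = tgt C k" and ke: "k = cmp C v' (cmp C (lt g' m) u')"
    using tr_elim[OF t2] by blast
  have k: "k \<in> arr C" unfolding ke using g' m by simp
  obtain g u v where g: "g \<in> obj C" "iso_arr C u" "iso_arr C v" "tgt C u = tobj C g (src C k)"
    "src C v = tobj C g (tgt C k)" "src C u = src C f" "tgt C v = tgt C f" and fe: "f = cmp C v (cmp C (lt g k) u)"
    using tr_elim[OF t1] by blast
  have "lt g k = cmp C (lt g v') (cmp C (lt g (lt g' m)) (lt g u'))"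
    unfolding ke using g g' m by (simp add: lt_cmp)
  also have "\<dots> = cmp C (lt g v') (cmp C (cmp C (assc C g g' (tgt C m)) (cmp C (lt (tobj C g g') m) (inv_arr C (assc C g g' (src C m))))) (lt g u'))"
    using lt_lt[OF g(1) g'(1) m] by simp
  finally have "f = cmp C (cmp C v (cmp C (lt g v') (assc C g g' (tgt C m)))) (cmp C (lt (tobj C g g') m) (cmp C (inv_arr C (assc C g g' (src C m))) (cmp C (lt g u') u)))"
    unfolding fe using g g' m by (simp add: cmp_assoc')
  moreover have "translate C (cmp C (cmp C v (cmp C (lt g v') (assc C g g' (tgt C m)))) (cmp C (lt (tobj C g g') m) (cmp C (inv_arr C (assc C g g' (src C m))) (cmp C (lt g u') u)))) m"
    using g g' m by (intro tr_intro) auto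
  ultimately show ?thesis by simp
qed


lemma tr_sym: assumes t: "translate C f k" and k: "k \<in> arr C" shows "translate C k f"
proof -
  obtain g u v where g: "g \<in> obj C" "iso_arr C u" "iso_arr C v" "tgt C u = tobj C g (src C k)"
    "src C v = tobj C g (tgt C k)" "src C u = src C f" "tgt C v = tgt C f" and fe: "f = cmp C v (cmp C (lt g k) u)"
    using tr_elim[OF t] by blast
  have f: "f \<in> arr C" "src C f = src C u" "tgt C f = tgt C v" unfolding fe using g k by auto
  obtain g' e where g': "g' \<in> obj C" and e: "iso_arr C e" "e \<in> hom C (tobj C g' g) (uobj C)"
    using inv_left_obj[OF g(1)] by blast
  have e': "e \<in> arr C" "src C e = tobj C g' g" "tgt C e = uobj C" using e by (auto simp: hom_iff)
  let ?al = "alpha g g' e"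
  have lk: "lt g k = cmp C (inv_arr C v) (cmp C f (inv_arr C u))"
    unfolding fe using g k by (simp add: cmp_assoc')
  have "k = cmp C (cmp C (?al (tgt C k)) (lt g' (lt g k))) (inv_arr C (?al (src C k)))"
    using iso_move_right[OF iso_alpha[OF g(1) g' e] k _ _ alpha_nat[OF g(1) g' e k, symmetric]] g g' e e' k by simp
  also have "\<dots> = cmp C (cmp C (?al (tgt C k)) (lt g' (inv_arr C v))) (cmp C (lt g' f) (cmp C (lt g' (inv_arr C u)) (inv_arr C (?al (src C k)))))"
    unfolding lk using g g' e e' k f by (simp add: lt_cmp cmp_assoc')
  finally have *: "k = \<dots>" .
  have "translate C (cmp C (cmp C (?al (tgt C k)) (lt g' (inv_arr C v))) (cmp C (lt g' f) (cmp C (lt g' (inv_arr C u)) (inv_arr C (?al (src C k)))))) f"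
    using g g' e e' k f by (intro tr_intro) auto
  then show ?thesis using * by simp
qed

lemma hideal_tr: assumes I: "hideal_2r C I" and f: "f \<in> I" and t: "translate C f' f"
  shows "f' \<in> I"
proof -
  have fa: "f \<in> arr C" using I f unfolding hideal_2r_def by blast
  obtain g u v where g: "g \<in> obj C" "iso_arr C u" "iso_arr C v" "tgt C u = tobj C g (src C f)"
    "src C v = tobj C g (tgt C f)" and fe: "f' = cmp C v (cmp C (lt g f) u)"
    using tr_elim[OF t] by blast
  have "lt g f \<in> I" using I f g unfolding hideal_2r_def by blast
  moreover have "lt g f \<in> arr C" using g fa by simp
  ultimately have "cmp C (lt g f) u \<in> I" using I g fa unfolding hideal_2r_def by auto
  moreover have "cmp C (lt g f) u \<in> arr C" using g fa by simp
  ultimately have "cmp C v (cmp C (lt g f) u) \<in> I" using I g fa unfolding hideal_2r_def by auto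
  then show ?thesis using fe by simp
qed

lemma hideal_tr': "hideal_2r C I \<Longrightarrow> f \<in> I \<Longrightarrow> translate C f f' \<Longrightarrow> f' \<in> arr C \<Longrightarrow> f' \<in> I"
  using hideal_tr tr_sym by blast


lemma absorb: assumes al: "al \<in> hom C Y Y" and q: "q \<in> hom C (uobj C) Y"
  shows "\<exists>e\<in>hom C (uobj C) (uobj C). cmp C al q = cmp C q e"
proof -
  have al': "al \<in> arr C" "src C al = Y" "tgt C al = Y" and q': "q \<in> arr C" "src C q = uobj C" "tgt C q = Y"
    using al q by (auto simp: hom_iff)
  have Y: "Y \<in> obj C" using q' by auto
  have "cmp C (inv_arr C (run C Y)) (cmp C al (run C Y)) \<in> hom C (tobj C Y (uobj C)) (tobj C Y (uobj C))"
    unfolding hom_def mem_Collect_eq using al' Y by simp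
  then obtain e0 where e0: "e0 \<in> hom C (uobj C) (uobj C)" and le: "lt Y e0 = cmp C (inv_arr C (run C Y)) (cmp C al (run C Y))"
    using lt_full[OF Y uobj_obj' uobj_obj'] by blast
  have e0': "e0 \<in> arr C" "src C e0 = uobj C" "tgt C e0 = uobj C" using e0 by (auto simp: hom_iff)
  have alr: "al = cmp C (run C Y) (cmp C (lt Y e0) (inv_arr C (run C Y)))"
    unfolding le using al' Y by (simp add: cmp_assoc')
  have rq: "cmp C (inv_arr C (run C Y)) q = cmp C (tmor C q (idm C (uobj C))) (inv_arr C (run C (uobj C)))"
    apply (rule iso_swap)
    using run_nat'[OF q'(1)] q' Y by auto
  have sw: "cmp C (lt Y e0) (tmor C q (idm C (uobj C))) = cmp C (tmor C q (idm C (uobj C))) (lt (uobj C) e0)"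
    using q' e0' Y by (simp flip: tmor_cmp')
  have rn: "cmp C (run C Y) (tmor C q (idm C (uobj C))) = cmp C q (run C (uobj C))"
    using run_nat'[OF q'(1)] q' by simp
  have "cmp C al q = cmp C (run C Y) (cmp C (lt Y e0) (cmp C (inv_arr C (run C Y)) q))"
    unfolding alr using q' e0' Y by (simp add: cmp_assoc')
  also have "\<dots> = cmp C (run C Y) (cmp C (lt Y e0) (cmp C (tmor C q (idm C (uobj C))) (inv_arr C (run C (uobj C)))))"
    unfolding rq ..
  also have "\<dots> = cmp C (run C Y) (cmp C (tmor C q (idm C (uobj C))) (cmp C (lt (uobj C) e0) (inv_arr C (run C (uobj C)))))"
    using q' e0' Y by (subst cmp_eq_ext[OF sw]) auto
  also have "\<dots> = cmp C q (cmp C (run C (uobj C)) (cmp C (lt (uobj C) e0) (inv_arr C (run C (uobj C)))))"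
    using q' e0' Y by (subst cmp_eq_ext[OF rn]) auto
  finally have *: "cmp C al q = \<dots>" .
  have "cmp C (run C (uobj C)) (cmp C (lt (uobj C) e0) (inv_arr C (run C (uobj C)))) \<in> hom C (uobj C) (uobj C)"
    unfolding hom_def mem_Collect_eq using e0' by simp
  then show ?thesis using * by blast
qed

lemma iso_arrI: "a \<in> arr C \<Longrightarrow> b \<in> arr C \<Longrightarrow> src C b = tgt C a \<Longrightarrow> tgt C b = src C a \<Longrightarrow>
  cmp C b a = idm C (src C a) \<Longrightarrow> cmp C a b = idm C (tgt C a) \<Longrightarrow> iso_arr C a"
  unfolding iso_arr_def hom_def by blast

lemma tr_unique: assumes tp: "translate C t p" and tq: "translate C t q"
  and p: "p \<in> arr C" "src C p = uobj C" and q: "q \<in> arr C" "src C q = uobj C"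
  shows "\<exists>al. al \<in> hom C (tgt C q) (tgt C p) \<and> iso_arr C al \<and> p = cmp C al q"
proof -
  obtain g u v where g: "g \<in> obj C" "iso_arr C u" "iso_arr C v" "tgt C u = tobj C g (src C p)"
    "src C v = tobj C g (tgt C p)" "src C u = src C t" "tgt C v = tgt C t" and te: "t = cmp C v (cmp C (lt g p) u)"
    using tr_elim[OF tp] by blast
  obtain g' u' v' where g': "g' \<in> obj C" "iso_arr C u'" "iso_arr C v'" "tgt C u' = tobj C g' (src C q)"
    "src C v' = tobj C g' (tgt C q)" "src C u' = src C t" "tgt C v' = tgt C t" and te': "t = cmp C v' (cmp C (lt g' q) u')"
    using tr_elim[OF tq] by blast
  define sg where "sg = cmp C (run C g') (cmp C u' (cmp C (inv_arr C u) (inv_arr C (run C g))))"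
  have sg: "sg \<in> arr C" "src C sg = g" "tgt C sg = g'" "iso_arr C sg"
    unfolding sg_def using g g' p q by auto
  have su: "tmor C sg (idm C (uobj C)) = cmp C u' (inv_arr C u)"
  proof -
    have "cmp C (run C g') (tmor C sg (idm C (uobj C))) = cmp C sg (run C g)"
      using run_nat'[OF sg(1)] sg by simp
    from iso_move_left[OF iso_run[OF g'(1)] _ _ _ this]
    have "tmor C sg (idm C (uobj C)) = cmp C (inv_arr C (run C g')) (cmp C sg (run C g))"
      using sg g g' by simp
    also have "\<dots> = cmp C u' (inv_arr C u)" unfolding sg_def using g g' p q by (simp add: cmp_assoc')
    finally show ?thesis .
  qed
  have vv: "tgt C v' = tgt C v" using g g' by simp
  have lp0: "lt g p = cmp C (inv_arr C v) (cmp C t (inv_arr C u))"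
    unfolding te using g p by (simp add: cmp_assoc')
  have lp1: "cmp C t (inv_arr C u) = cmp C v' (cmp C (lt g' q) (cmp C u' (inv_arr C u)))"
    unfolding te' using g g' q by (simp add: cmp_assoc')
  have lp2: "cmp C (lt g' q) (tmor C sg (idm C (uobj C))) = cmp C (tmor C sg (idm C (tgt C q))) (lt g q)"
    using sg q g g' by (simp flip: tmor_cmp')
  have lp: "lt g p = cmp C (cmp C (inv_arr C v) (cmp C v' (tmor C sg (idm C (tgt C q))))) (lt g q)"
    unfolding lp0 lp1 su[symmetric] lp2 using sg q g g' vv by (simp add: cmp_assoc')
  define W where "W = cmp C (inv_arr C v) (cmp C v' (tmor C sg (idm C (tgt C q))))"
  have W: "W \<in> arr C" "src C W = tobj C g (tgt C q)" "tgt C W = tobj C g (tgt C p)" "iso_arr C W"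
    unfolding W_def using sg g g' q p vv by auto
  have objs: "tgt C q \<in> obj C" "tgt C p \<in> obj C" using p q by auto
  obtain al where al: "al \<in> hom C (tgt C q) (tgt C p)" "lt g al = W"
    using lt_full[OF g(1) objs, of W] W unfolding hom_def mem_Collect_eq by blast
  obtain be where be: "be \<in> hom C (tgt C p) (tgt C q)" "lt g be = inv_arr C W"
    using lt_full[OF g(1) objs(2) objs(1), of "inv_arr C W"] W unfolding hom_def mem_Collect_eq by auto
  have al': "al \<in> arr C" "src C al = tgt C q" "tgt C al = tgt C p" using al by (auto simp: hom_iff)
  have be': "be \<in> arr C" "src C be = tgt C p" "tgt C be = tgt C q" using be by (auto simp: hom_iff)
  have "lt g (cmp C be al) = lt g (idm C (tgt C q))"
    using al' be' g objs W by (simp add: lt_cmp al(2) be(2))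
  then have 1: "cmp C be al = idm C (tgt C q)"
    using lt_faithful[OF g(1), of "cmp C be al" "idm C (tgt C q)"] al' be' objs by simp
  have "lt g (cmp C al be) = lt g (idm C (tgt C p))"
    using al' be' g objs W by (simp add: lt_cmp al(2) be(2))
  then have 2: "cmp C al be = idm C (tgt C p)"
    using lt_faithful[OF g(1), of "cmp C al be" "idm C (tgt C p)"] al' be' objs by simp
  have iso: "iso_arr C al" using iso_arrI[OF al'(1) be'(1)] al' be' 1 2 by simp
  have "lt g p = lt g (cmp C al q)"
    using lp al' q g unfolding W_def[symmetric] by (simp add: lt_cmp al(2))
  then have "p = cmp C al q"
    using lt_faithful[OF g(1), of p "cmp C al q"] al' q p by simp
  then show ?thesis using al iso by blast
qed



lemma cmp_madd_r: "f \<in> arr C \<Longrightarrow> f' \<in> arr C \<Longrightarrow> g \<in> arr C \<Longrightarrow> src C f' = src C f \<Longrightarrow> tgt C f' = tgt C f \<Longrightarrow>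
  src C g = tgt C f \<Longrightarrow> cmp C g (madd C f f') = madd C (cmp C g f) (cmp C g f')"
proof -
  assume a: "f \<in> arr C" "f' \<in> arr C" "g \<in> arr C" "src C f' = src C f" "tgt C f' = tgt C f" "src C g = tgt C f"
  have "f' \<in> hom C (src C f) (tgt C f)" "g \<in> hom C (tgt C f) (tgt C g)"
    unfolding hom_def mem_Collect_eq using a by simp_all
  from cmp_madd_right[OF arr_hom[OF a(1)] this] show ?thesis .
qed

lemma cmp_madd_l: "f \<in> arr C \<Longrightarrow> g \<in> arr C \<Longrightarrow> g' \<in> arr C \<Longrightarrow> src C g' = src C g \<Longrightarrow> tgt C g' = tgt C g \<Longrightarrow>
  src C g = tgt C f \<Longrightarrow> cmp C (madd C g g') f = madd C (cmp C g f) (cmp C g' f)"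
proof -
  assume a: "f \<in> arr C" "g \<in> arr C" "g' \<in> arr C" "src C g' = src C g" "tgt C g' = tgt C g" "src C g = tgt C f"
  have "g \<in> hom C (tgt C f) (tgt C g)" "g' \<in> hom C (tgt C f) (tgt C g)"
    unfolding hom_def mem_Collect_eq using a by simp_all
  from cmp_madd_left[OF arr_hom[OF a(1)] this] show ?thesis .
qed

lemma lt_madd: "a \<in> obj C \<Longrightarrow> f \<in> arr C \<Longrightarrow> f' \<in> arr C \<Longrightarrow> src C f' = src C f \<Longrightarrow> tgt C f' = tgt C f \<Longrightarrow>
  lt a (madd C f f') = madd C (lt a f) (lt a f')"
proof -
  assume a: "a \<in> obj C" "f \<in> arr C" "f' \<in> arr C" "src C f' = src C f" "tgt C f' = tgt C f"
  have "f' \<in> hom C (src C f) (tgt C f)"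
    unfolding hom_def mem_Collect_eq using a by simp_all
  from tmor_madd_right[OF idm_hom[OF a(1)] arr_hom[OF a(2)] this] show ?thesis .
qed

lemma idem_zero: assumes x: "x \<in> hom C a b" and xx: "madd C x x = x" shows "x = mzero C a b"
proof -
  have o: "a \<in> obj C" "b \<in> obj C" using x by (auto simp: hom_iff)
  have n: "mneg C x \<in> hom C a b" using mneg_hom[OF x] .
  have "x = madd C x (mzero C a b)" using madd_zero[OF x] by simp
  also have "\<dots> = madd C x (madd C x (mneg C x))" using madd_neg[OF x] by simp
  also have "\<dots> = madd C (madd C x x) (mneg C x)" using madd_assoc[OF x x n] by simp
  also have "\<dots> = madd C x (mneg C x)" using xx by simp
  also have "\<dots> = mzero C a b" using madd_neg[OF x] .
  finally show ?thesis .
qed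

lemma isomorphic_refl: "a \<in> obj C \<Longrightarrow> isomorphic C a a"
  using idm_hom[of a] iso_idm[of a] unfolding isomorphic_def by blast

lemma isomorphic_sym: "isomorphic C a b \<Longrightarrow> isomorphic C b a"
proof -
  assume "isomorphic C a b"
  then obtain u where "u \<in> hom C a b" "iso_arr C u" unfolding isomorphic_def by blast
  then have "inv_arr C u \<in> hom C b a" "iso_arr C (inv_arr C u)" unfolding hom_def mem_Collect_eq by simp_all
  then show ?thesis unfolding isomorphic_def by blast
qed

lemma isomorphic_trans: "isomorphic C a b \<Longrightarrow> isomorphic C b c \<Longrightarrow> isomorphic C a c"
proof -
  assume "isomorphic C a b" "isomorphic C b c"
  then obtain u v where "u \<in> hom C a b" "iso_arr C u" "v \<in> hom C b c" "iso_arr C v" unfolding isomorphic_def by blast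
  then have "cmp C v u \<in> hom C a c" "iso_arr C (cmp C v u)" unfolding hom_def mem_Collect_eq by simp_all
  then show ?thesis unfolding isomorphic_def by blast
qed

lemma isomorphic_obj: "isomorphic C a b \<Longrightarrow> a \<in> obj C \<and> b \<in> obj C"
proof -
  assume "isomorphic C a b"
  then obtain u where "u \<in> hom C a b" unfolding isomorphic_def by blast
  then have "u \<in> arr C" "src C u = a" "tgt C u = b" using hom_iff by blast+
  then show ?thesis using src_obj tgt_obj by blast
qed

lemma iso_class_eq: "isomorphic C a b \<Longrightarrow> iso_class C a = iso_class C b"
  unfolding iso_class_def using isomorphic_sym isomorphic_trans by blast

lemma iso_class_self: "a \<in> obj C \<Longrightarrow> a \<in> iso_class C a"
  unfolding iso_class_def using isomorphic_refl by blast

lemma K0_rep: "\<gamma> \<in> K0 C \<Longrightarrow> b \<in> \<gamma> \<Longrightarrow> \<gamma> = iso_class C b"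
  unfolding K0_def iso_class_def using isomorphic_sym isomorphic_trans by blast

lemma K0_obj: "\<gamma> \<in> K0 C \<Longrightarrow> b \<in> \<gamma> \<Longrightarrow> b \<in> obj C"
  unfolding K0_def iso_class_def by blast

lemma lt_iso_reflect: assumes g: "g \<in> obj C" and h: "h \<in> arr C" and i: "iso_arr C (lt g h)"
  shows "iso_arr C h"
proof -
  have objs: "src C h \<in> obj C" "tgt C h \<in> obj C" using h by auto
  obtain be where be: "be \<in> hom C (tgt C h) (src C h)" "lt g be = inv_arr C (lt g h)"
    using lt_full[OF g objs(2) objs(1), of "inv_arr C (lt g h)"] i g h unfolding hom_def mem_Collect_eq by auto
  have be': "be \<in> arr C" "src C be = tgt C h" "tgt C be = src C h" using be by (auto simp: hom_iff)
  have "lt g (cmp C be h) = lt g (idm C (src C h))"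
    using be' g h i by (simp add: lt_cmp be(2))
  then have 1: "cmp C be h = idm C (src C h)"
    using lt_faithful[OF g, of "cmp C be h" "idm C (src C h)"] be' h by simp
  have "lt g (cmp C h be) = lt g (idm C (tgt C h))"
    using be' g h i by (simp add: lt_cmp be(2))
  then have 2: "cmp C h be = idm C (tgt C h)"
    using lt_faithful[OF g, of "cmp C h be" "idm C (tgt C h)"] be' h by simp
  show ?thesis using iso_arrI[OF h be'(1)] be' 1 2 by simp
qed

lemma tensor_solve: assumes a: "a \<in> obj C" and b: "b \<in> obj C"
  shows "\<exists>c\<in>obj C. \<exists>w. iso_arr C w \<and> w \<in> hom C (tobj C a c) b"
proof -
  obtain a' e where a': "a' \<in> obj C" and e: "iso_arr C e" "e \<in> hom C (tobj C a a') (uobj C)"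
    using inv_right_obj[OF a] by blast
  have e': "e \<in> arr C" "src C e = tobj C a a'" "tgt C e = uobj C" using e by (auto simp: hom_iff)
  have "iso_arr C (cmp C (lun C b) (cmp C (tmor C e (idm C b)) (inv_arr C (assc C a a' b))))
    \<and> cmp C (lun C b) (cmp C (tmor C e (idm C b)) (inv_arr C (assc C a a' b))) \<in> hom C (tobj C a (tobj C a' b)) b"
    unfolding hom_def mem_Collect_eq using a a' b e e' by simp
  then show ?thesis using a' b by (intro bexI[of _ "tobj C a' b"]) auto
qed

lemma obj_cancel: assumes g: "g \<in> obj C" and a: "a \<in> obj C" "b \<in> obj C"
  and i: "isomorphic C (tobj C g a) (tobj C g b)" shows "isomorphic C a b"
proof -
  obtain w where w: "w \<in> hom C (tobj C g a) (tobj C g b)" "iso_arr C w" using i unfolding isomorphic_def by blast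
  obtain h where h: "h \<in> hom C a b" "lt g h = w" using lt_full[OF g a w(1)] by blast
  have "iso_arr C h" using lt_iso_reflect[OF g, of h] h w by (auto simp: hom_iff)
  then show ?thesis using h unfolding isomorphic_def by blast
qed

lemma conj_bij: assumes v: "iso_arr C v" "src C v = b'" "tgt C v = b" and u: "iso_arr C u" "src C u = a" "tgt C u = a'"
  shows "bij_betw (\<lambda>h. cmp C v (cmp C h u)) (hom C a' b') (hom C a b)"
proof (rule bij_betwI[where g = "\<lambda>h. cmp C (inv_arr C v) (cmp C h (inv_arr C u))"])
  show "(\<lambda>h. cmp C v (cmp C h u)) \<in> hom C a' b' \<rightarrow> hom C a b"
    using u v unfolding hom_def by auto
  show "(\<lambda>h. cmp C (inv_arr C v) (cmp C h (inv_arr C u))) \<in> hom C a b \<rightarrow> hom C a' b'"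
    using u v unfolding hom_def by auto
  fix x assume "x \<in> hom C a' b'"
  then have x: "x \<in> arr C" "src C x = a'" "tgt C x = b'" by (auto simp: hom_iff)
  show "cmp C (inv_arr C v) (cmp C (cmp C v (cmp C x u)) (inv_arr C u)) = x"
    using x u v by (simp add: cmp_assoc')
next
  fix y assume "y \<in> hom C a b"
  then have y: "y \<in> arr C" "src C y = a" "tgt C y = b" by (auto simp: hom_iff)
  show "cmp C v (cmp C (cmp C (inv_arr C v) (cmp C y (inv_arr C u))) u) = y"
    using y u v by (simp add: cmp_assoc')
qed

end


context tightening begin

lemma gr_obj[simp]: "gr (pi x) \<in> obj C"
  using gr_rep[OF pi_K0] K0_obj[OF pi_K0] by blast

lemma pi_class: "pi x = iso_class C (gr (pi x))"
  using K0_rep[OF pi_K0 gr_rep[OF pi_K0]] .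

lemma phi_hom': "r \<in> Rx x \<Longrightarrow> phi x r \<in> hom C (uobj C) (gr (pi x))"
  using bij_betw_apply[OF phi_bij] .

lemma phi_arr[simp]: "r \<in> Rx x \<Longrightarrow> phi x r \<in> arr C"
  and src_phi[simp]: "r \<in> Rx x \<Longrightarrow> src C (phi x r) = uobj C"
  and tgt_phi[simp]: "r \<in> Rx x \<Longrightarrow> tgt C (phi x r) = gr (pi x)"
  using phi_hom'[of r x] unfolding hom_def by auto

lemma phi_inj: "r \<in> Rx x \<Longrightarrow> s \<in> Rx x \<Longrightarrow> phi x r = phi x s \<Longrightarrow> r = s"
  using bij_betw_imp_inj_on[OF phi_bij] unfolding inj_on_def by blast

lemma phi_surj: "f \<in> hom C (uobj C) (gr (pi x)) \<Longrightarrow> \<exists>r\<in>Rx x. phi x r = f"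
  using bij_betw_imp_surj_on[OF phi_bij, of x] by (metis imageE)

lemma pi_diff: assumes e: "pi x = pi y" shows "pi (y - x) = iso_class C (uobj C)"
proof -
  let ?k = "y - x"
  let ?a = "gr (pi ?k)" and ?b = "gr (pi x)"
  have a: "?a \<in> pi ?k" and b: "?b \<in> pi x" using gr_rep[OF pi_K0] by blast+
  have "pi (?k + x) = iso_class C (tobj C ?a ?b)" using pi_hom[OF a b] .
  then have "iso_class C (tobj C ?a ?b) = pi x" using e by simp
  then have "?b \<in> iso_class C (tobj C ?a ?b)" using b by simp
  then have i1: "isomorphic C (tobj C ?a ?b) ?b" unfolding iso_class_def by blast
  have i0: "isomorphic C (tobj C ?b ?a) (tobj C ?a ?b)"
    unfolding isomorphic_def using brd_hom[OF gr_obj gr_obj] iso_brd[OF gr_obj gr_obj] by blast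
  have i2: "isomorphic C ?b (tobj C ?b (uobj C))"
    using isomorphic_sym[of "tobj C ?b (uobj C)" ?b] run_hom[OF gr_obj] iso_run[OF gr_obj] unfolding isomorphic_def by blast
  have "isomorphic C (tobj C ?b ?a) (tobj C ?b (uobj C))"
    using isomorphic_trans[OF isomorphic_trans[OF i0 i1] i2] .
  then have "isomorphic C ?a (uobj C)" using obj_cancel[of ?b ?a "uobj C"] by simp
  then have "iso_class C ?a = iso_class C (uobj C)" by (rule iso_class_eq)
  then show ?thesis using pi_class[of ?k] by simp
qed

lemma pi0: "pi 0 = iso_class C (uobj C)"
  using pi_diff[of 0 0] by simp

lemma gr0[simp]: "gr (pi 0) = uobj C"
  using gr_unit pi0 by simp

lemma hideal_grD: "hideal_gr Rx J \<Longrightarrow> r \<in> J \<Longrightarrow> a * r \<in> J \<and> r * a \<in> J"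
  unfolding hideal_gr_def by blast

lemma transfer: assumes J: "hideal_gr Rx J" and r: "r \<in> Rx x" "r \<in> J" and s: "s \<in> Rx y"
  and t: "translate C (phi y s) (phi x r)" shows "s \<in> J"
proof -
  obtain al where al: "al \<in> hom C (gr (pi x)) (gr (pi y))" "iso_arr C al"
    using tr_unique[OF tr_refl t] r s by auto
  then have "isomorphic C (gr (pi x)) (gr (pi y))" unfolding isomorphic_def by blast
  then have exy: "pi x = pi y" using pi_class[of x] pi_class[of y] iso_class_eq by metis
  let ?k = "y - x"
  have pk: "pi ?k = iso_class C (uobj C)" using pi_diff[OF exy] .
  then have "gr (pi ?k) \<in> iso_class C (uobj C)" using gr_rep[OF pi_K0, of ?k] by simp
  then have "isomorphic C (uobj C) (gr (pi ?k))" unfolding iso_class_def by blast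
  then obtain w0 where w0: "w0 \<in> hom C (uobj C) (gr (pi ?k))" "iso_arr C w0" unfolding isomorphic_def by blast
  obtain u where u: "u \<in> Rx ?k" "phi ?k u = w0" using phi_surj[OF w0(1)] by blast
  have kx: "?k + x = y" by simp
  have w0': "w0 \<in> arr C" "src C w0 = uobj C" "tgt C w0 = gr (pi ?k)" using w0 unfolding hom_def by auto
  let ?L = "cmp C (tmor C w0 (idm C (gr (pi x)))) (cmp C (inv_arr C (lun C (gr (pi x)))) (phi x r))"
  have t1: "translate C ?L (phi y (u * r))"
    using phi_mult[OF u(1) r(1)] u(2) kx by simp
  have "translate C (cmp C (cmp C (tmor C w0 (idm C (gr (pi x)))) (inv_arr C (lun C (gr (pi x))))) (cmp C (phi x r) (idm C (uobj C)))) (phi x r)"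
    using r w0' w0(2) by (intro tr_iso tr_refl) auto
  then have t2: "translate C ?L (phi x r)" using r w0' by (simp add: cmp_assoc')
  have L: "?L \<in> arr C" using r w0' w0(2) by simp
  have ur: "u * r \<in> Rx y" using Rx_mult[OF u(1) r(1)] kx by simp
  have t3: "translate C (phi y s) (phi y (u * r))"
    using tr_trans[OF tr_trans[OF t tr_sym[OF t2 phi_arr[OF r(1)]] L] t1 phi_arr[OF ur]] .
  obtain be where be: "be \<in> hom C (gr (pi y)) (gr (pi y))" "phi y s = cmp C be (phi y (u * r))"
    using tr_unique[OF tr_refl t3] s ur by auto
  obtain e where e: "e \<in> hom C (uobj C) (uobj C)" "cmp C be (phi y (u * r)) = cmp C (phi y (u * r)) e"
    using absorb[OF be(1) phi_hom'[OF ur]] by blast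
  obtain c where c: "c \<in> Rx 0" "phi 0 c = e" using phi_surj[of e 0] e(1) by auto
  have "phi y (u * r * c) = cmp C (phi y (u * r)) (phi 0 c)" using phi_mult_deg0[OF ur c(1)] .
  then have "phi y s = phi y (u * r * c)" using be(2) e(2) c(2) by simp
  moreover have "u * r * c \<in> Rx y" using Rx_mult[OF ur c(1)] by simp
  ultimately have "s = u * r * c" using phi_inj s by blast
  moreover have "u * r * c \<in> J" using hideal_grD[OF J hideal_grD[OF J r(2), THEN conjunct1]] by blast
  ultimately show ?thesis by simp
qed


lemma NF: assumes a: "a \<in> obj C" and b: "b \<in> obj C"
  shows "\<exists>x v. iso_arr C v \<and> src C v = tobj C a (gr (pi x)) \<and> tgt C v = b \<and>
    bij_betw (\<lambda>r. cmp C v (cmp C (lt a (phi x r)) (inv_arr C (run C a)))) (Rx x) (hom C a b)"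
proof -
  obtain c w where c: "c \<in> obj C" and w: "iso_arr C w" "w \<in> hom C (tobj C a c) b"
    using tensor_solve[OF a b] by blast
  have "iso_class C c \<in> K0 C" unfolding K0_def using c by blast
  then obtain x where x: "pi x = iso_class C c" using pi_surj by (metis imageE)
  have "gr (pi x) \<in> iso_class C c" using gr_rep[OF pi_K0, of x] x by simp
  then have "isomorphic C c (gr (pi x))" unfolding iso_class_def by blast
  then obtain w' where w': "w' \<in> hom C c (gr (pi x))" "iso_arr C w'" unfolding isomorphic_def by blast
  have w1: "w \<in> arr C" "src C w = tobj C a c" "tgt C w = b" using w unfolding hom_def by auto
  have w1': "w' \<in> arr C" "src C w' = c" "tgt C w' = gr (pi x)" using w' unfolding hom_def by auto
  define v where "v = cmp C w (lt a (inv_arr C w'))"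
  have v: "iso_arr C v" "src C v = tobj C a (gr (pi x))" "tgt C v = b"
    unfolding v_def using a c w1 w1' w'(2) w(1) by auto
  have b1: "bij_betw (phi x) (Rx x) (hom C (uobj C) (gr (pi x)))" by (rule phi_bij)
  have b2: "bij_betw (lt a) (hom C (uobj C) (gr (pi x))) (hom C (tobj C a (uobj C)) (tobj C a (gr (pi x))))"
    using lt_bij[OF a] by simp
  have b3: "bij_betw (\<lambda>h. cmp C v (cmp C h (inv_arr C (run C a)))) (hom C (tobj C a (uobj C)) (tobj C a (gr (pi x)))) (hom C a b)"
    using conj_bij[OF v, of "inv_arr C (run C a)" a "tobj C a (uobj C)"] a by simp
  have "bij_betw ((\<lambda>h. cmp C v (cmp C h (inv_arr C (run C a)))) \<circ> (lt a \<circ> phi x)) (Rx x) (hom C a b)"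
    by (rule bij_betw_trans[OF bij_betw_trans[OF b1 b2] b3])
  then have "bij_betw (\<lambda>r. cmp C v (cmp C (lt a (phi x r)) (inv_arr C (run C a)))) (Rx x) (hom C a b)"
    by (simp add: comp_def)
  then show ?thesis using v by blast
qed

lemma NF_tr: "a \<in> obj C \<Longrightarrow> r \<in> Rx x \<Longrightarrow> iso_arr C v \<Longrightarrow> src C v = tobj C a (gr (pi x)) \<Longrightarrow>
  translate C (cmp C v (cmp C (lt a (phi x r)) (inv_arr C (run C a)))) (phi x r)"
  by (intro tr_intro) auto

lemma every_tr: assumes f: "f \<in> arr C" shows "\<exists>x r. r \<in> Rx x \<and> translate C f (phi x r)"
proof -
  obtain x v where v: "iso_arr C v" "src C v = tobj C (src C f) (gr (pi x))" "tgt C v = tgt C f"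
    and bj: "bij_betw (\<lambda>r. cmp C v (cmp C (lt (src C f) (phi x r)) (inv_arr C (run C (src C f))))) (Rx x) (hom C (src C f) (tgt C f))"
    using NF[OF src_obj[OF f] tgt_obj[OF f]] by blast
  have "f \<in> hom C (src C f) (tgt C f)" using arr_hom[OF f] .
  then have "f \<in> (\<lambda>r. cmp C v (cmp C (lt (src C f) (phi x r)) (inv_arr C (run C (src C f))))) ` Rx x"
    using bij_betw_imp_surj_on[OF bj] by blast
  then obtain r where r: "r \<in> Rx x" "f = cmp C v (cmp C (lt (src C f) (phi x r)) (inv_arr C (run C (src C f))))"
    by blast
  have "translate C f (phi x r)" using NF_tr[OF src_obj[OF f] r(1) v(1) v(2)] r(2) by simp
  then show ?thesis using r(1) by blast
qed


lemma COMP0: assumes f1: "f1 \<in> arr C" and f2: "f2 \<in> arr C" and ty: "src C f2 = tgt C f1"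
  and sa: "src C f1 = a" and tb: "tgt C f1 = b" and tc: "tgt C f2 = c"
  shows "\<exists>x r y s. r \<in> Rx x \<and> s \<in> Rx y \<and> translate C f1 (phi x r) \<and> translate C f2 (phi y s)
     \<and> translate C (cmp C f2 f1) (phi (y + x) (s * r))"
proof -
  let ?a = a and ?b = b and ?c = c
  have oa: "?a \<in> obj C" "?b \<in> obj C" "?c \<in> obj C" using f1 f2 sa tb tc by auto
  obtain x v where v: "iso_arr C v" "src C v = tobj C ?a (gr (pi x))" "tgt C v = ?b"
    and bj: "bij_betw (\<lambda>r. cmp C v (cmp C (lt ?a (phi x r)) (inv_arr C (run C ?a)))) (Rx x) (hom C ?a ?b)"
    using NF[OF oa(1) oa(2)] by blast
  have "f1 \<in> (\<lambda>r. cmp C v (cmp C (lt ?a (phi x r)) (inv_arr C (run C ?a)))) ` Rx x"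
    using bij_betw_imp_surj_on[OF bj] arr_hom[OF f1] sa tb by blast
  then obtain r where r: "r \<in> Rx x" and f1e: "f1 = cmp C v (cmp C (lt ?a (phi x r)) (inv_arr C (run C ?a)))"
    by blast
  let ?gX = "gr (pi x)"
  let ?p = "phi x r"
  obtain Z w where Z: "Z \<in> obj C" and w: "iso_arr C w" "w \<in> hom C (tobj C ?a Z) ?c"
    using tensor_solve[OF oa(1) oa(3)] by blast
  have w1: "w \<in> arr C" "src C w = tobj C ?a Z" "tgt C w = ?c" using w(2) unfolding hom_def by auto
  have "cmp C (inv_arr C w) (cmp C f2 v) \<in> hom C (tobj C ?a ?gX) (tobj C ?a Z)"
    unfolding hom_def mem_Collect_eq using w1 w(1) v f2 ty tb tc by simp
  then obtain k where k: "k \<in> hom C ?gX Z" and lk: "lt ?a k = cmp C (inv_arr C w) (cmp C f2 v)"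
    using lt_full[OF oa(1) gr_obj Z] by metis
  have k1: "k \<in> arr C" "src C k = ?gX" "tgt C k = Z" using k unfolding hom_def by auto
  have f2v: "cmp C f2 v = cmp C w (lt ?a k)"
    unfolding lk using w1 w(1) v f2 ty tb tc by simp
  have f2e: "f2 = cmp C w (cmp C (lt ?a k) (inv_arr C v))"
    using iso_move_right[OF v(1) f2 _ _ f2v] w1 k1 v ty oa tb tc by (simp add: cmp_assoc')
  obtain y v3 where v3: "iso_arr C v3" "src C v3 = tobj C ?gX (gr (pi y))" "tgt C v3 = Z"
    and bj3: "bij_betw (\<lambda>s. cmp C v3 (cmp C (lt ?gX (phi y s)) (inv_arr C (run C ?gX)))) (Rx y) (hom C ?gX Z)"
    using NF[OF gr_obj Z] by blast
  have "k \<in> (\<lambda>s. cmp C v3 (cmp C (lt ?gX (phi y s)) (inv_arr C (run C ?gX)))) ` Rx y"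
    using bij_betw_imp_surj_on[OF bj3] k by blast
  then obtain s where s: "s \<in> Rx y" and ke: "k = cmp C v3 (cmp C (lt ?gX (phi y s)) (inv_arr C (run C ?gX)))"
    by blast
  let ?q = "phi y s"
  let ?gY = "gr (pi y)"
  have tf1: "translate C f1 ?p" using NF_tr[OF oa(1) r v(1) v(2)] f1e by simp
  have tk: "translate C k ?q" using NF_tr[OF gr_obj s v3(1) v3(2)] ke by simp
  have "translate C (cmp C w (cmp C (lt ?a k) (inv_arr C v))) k"
    using oa k1 w1 w(1) v by (intro tr_intro) auto
  then have tf2: "translate C f2 ?q" using tr_trans[OF _ tk] f2e s by simp
  have f21: "cmp C f2 f1 = cmp C w (cmp C (lt ?a (cmp C k ?p)) (inv_arr C (run C ?a)))"
  proof -
    have "cmp C f2 f1 = cmp C (cmp C f2 v) (cmp C (lt ?a ?p) (inv_arr C (run C ?a)))"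
      unfolding f1e using f2 v r oa ty tb by (simp add: cmp_assoc')
    also have "\<dots> = cmp C w (cmp C (lt ?a (cmp C k ?p)) (inv_arr C (run C ?a)))"
      unfolding f2v using w1 k1 r oa by (simp add: cmp_assoc' lt_cmp)
    finally show ?thesis .
  qed
  have tf21: "translate C (cmp C f2 f1) (cmp C k ?p)"
    unfolding f21 using oa k1 w1 w(1) r by (intro tr_intro) auto
  have R1: "cmp C (inv_arr C (run C ?gX)) ?p = cmp C (tmor C ?p (idm C (uobj C))) (inv_arr C (run C (uobj C)))"
    apply (rule iso_swap)
    using run_nat'[of ?p] r by auto
  have R2a: "cmp C (lt ?gX ?q) (tmor C ?p (idm C (uobj C))) = tmor C ?p ?q"
    using r s by (simp flip: tmor_cmp')
  have bn: "cmp C (brd C ?gX ?gY) (tmor C ?p ?q) = cmp C (tmor C ?q ?p) (brd C (uobj C) (uobj C))"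
    using brd_nat'[of ?p ?q] r s by simp
  have R2b: "tmor C ?p ?q = cmp C (inv_arr C (brd C ?gX ?gY)) (cmp C (tmor C ?q ?p) (brd C (uobj C) (uobj C)))"
    using iso_move_left[OF iso_brd[OF gr_obj gr_obj] _ _ _ bn] r s by simp
  have ln: "cmp C (lun C ?gX) (lt (uobj C) ?p) = cmp C ?p (lun C (uobj C))"
    using lun_nat'[of ?p] r by simp
  have R3: "tmor C ?q ?p = cmp C (tmor C ?q (idm C ?gX)) (cmp C (inv_arr C (lun C ?gX)) (cmp C ?p (lun C (uobj C))))"
  proof -
    have "tmor C ?q ?p = cmp C (tmor C ?q (idm C ?gX)) (lt (uobj C) ?p)"
      using r s by (simp flip: tmor_cmp')
    also have "lt (uobj C) ?p = cmp C (inv_arr C (lun C ?gX)) (cmp C ?p (lun C (uobj C)))"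
      using iso_move_left[OF iso_lun[OF gr_obj] _ _ _ ln] r by simp
    finally show ?thesis .
  qed
  let ?T0 = "cmp C (tmor C ?q (idm C ?gX)) (cmp C (inv_arr C (lun C ?gX)) ?p)"
  let ?W1 = "cmp C v3 (inv_arr C (brd C ?gX ?gY))"
  let ?W2 = "cmp C (lun C (uobj C)) (cmp C (brd C (uobj C) (uobj C)) (inv_arr C (run C (uobj C))))"
  have kp: "cmp C k ?p = cmp C ?W1 (cmp C ?T0 ?W2)"
  proof -
    have "cmp C k ?p = cmp C v3 (cmp C (lt ?gX ?q) (cmp C (inv_arr C (run C ?gX)) ?p))"
      unfolding ke using v3 r s by (simp add: cmp_assoc')
    also have "\<dots> = cmp C v3 (cmp C (cmp C (lt ?gX ?q) (tmor C ?p (idm C (uobj C)))) (inv_arr C (run C (uobj C))))"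
      unfolding R1 using v3 r s by (simp add: cmp_assoc')
    also have "\<dots> = cmp C v3 (cmp C (tmor C ?p ?q) (inv_arr C (run C (uobj C))))"
      unfolding R2a ..
    also have "\<dots> = cmp C ?W1 (cmp C ?T0 ?W2)"
      unfolding R2b R3 using v3 r s by (simp add: cmp_assoc')
    finally show ?thesis .
  qed
  have "translate C (cmp C ?W1 (cmp C ?T0 ?W2)) (phi (y + x) (s * r))"
    using v3 r s by (intro tr_iso[OF phi_mult[OF s r] phi_arr[OF Rx_mult[OF s r]]]) auto
  then have "translate C (cmp C k ?p) (phi (y + x) (s * r))" using kp by simp
  then have "translate C (cmp C f2 f1) (phi (y + x) (s * r))"
    using tr_trans[OF tf21] Rx_mult[OF s r] by simp
  then show ?thesis using r s tf1 tf2 by blast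
qed

lemma COMP: assumes f1: "f1 \<in> arr C" and f2: "f2 \<in> arr C" and ty: "src C f2 = tgt C f1"
  shows "\<exists>x r y s. r \<in> Rx x \<and> s \<in> Rx y \<and> translate C f1 (phi x r) \<and> translate C f2 (phi y s)
     \<and> translate C (cmp C f2 f1) (phi (y + x) (s * r))"
  using COMP0[OF f1 f2 ty refl refl refl] .

end

context graded_comm_ring begin

lemma zero_Rx[simp]: "0 \<in> Rx x"
  using Rx_subgroup[of x] unfolding add_subgroup_def by blast
lemma add_Rx: "a \<in> Rx x \<Longrightarrow> b \<in> Rx x \<Longrightarrow> a + b \<in> Rx x"
  using Rx_subgroup[of x] unfolding add_subgroup_def by blast
lemma neg_Rx: "a \<in> Rx x \<Longrightarrow> - a \<in> Rx x"
  using Rx_subgroup[of x] unfolding add_subgroup_def by blast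

lemma hdecomp_hcomp: "hdecomp Rx r (\<lambda>y. hcomp Rx y r)"
proof -
  have "hdecomp Rx r (THE f. hdecomp Rx r f)" using theI'[OF direct_sum] .
  moreover have "(\<lambda>y. hcomp Rx y r) = (THE f. hdecomp Rx r f)" unfolding hcomp_def by simp
  ultimately show ?thesis by simp
qed

lemma hcomp_eq: "hdecomp Rx r f \<Longrightarrow> hcomp Rx y r = f y"
  unfolding hcomp_def using the1_equality[OF direct_sum] by simp

lemma hcomp_Rx: "hcomp Rx y r \<in> Rx y"
  using hdecomp_hcomp unfolding hdecomp_def by blast

lemma hcomp_fin: "finite {y. hcomp Rx y r \<noteq> 0}"
  using hdecomp_hcomp unfolding hdecomp_def by blast

lemma hcomp_sum: "r = (\<Sum>y\<in>{y. hcomp Rx y r \<noteq> 0}. hcomp Rx y r)"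
  using hdecomp_hcomp unfolding hdecomp_def by blast

lemma hdecompI: assumes "\<And>y. f y \<in> Rx y" "finite A" "{y. f y \<noteq> 0} \<subseteq> A" "r = sum f A"
  shows "hdecomp Rx r f"
proof -
  have "sum f A = sum f {y. f y \<noteq> 0}"
    using assms(2,3) by (intro sum.mono_neutral_right) auto
  then show ?thesis unfolding hdecomp_def using assms finite_subset by metis
qed

lemma hcomp_sum_sup: "finite A \<Longrightarrow> {y. hcomp Rx y r \<noteq> 0} \<subseteq> A \<Longrightarrow> r = (\<Sum>y\<in>A. hcomp Rx y r)"
proof -
  assume a: "finite A" "{y. hcomp Rx y r \<noteq> 0} \<subseteq> A"
  have "(\<Sum>y\<in>{y. hcomp Rx y r \<noteq> 0}. hcomp Rx y r) = (\<Sum>y\<in>A. hcomp Rx y r)"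
    using a by (intro sum.mono_neutral_left) auto
  then show ?thesis using hcomp_sum[of r] by simp
qed

lemma hcomp_homog: assumes r: "r \<in> Rx x" shows "hcomp Rx y r = (if y = x then r else 0)"
proof -
  have "hdecomp Rx r (\<lambda>z. if z = x then r else 0)"
    by (rule hdecompI[where A = "{x}"]) (use r in auto)
  then show ?thesis using hcomp_eq by simp
qed

lemma Rx_disj: "r \<in> Rx x \<Longrightarrow> r \<in> Rx y \<Longrightarrow> x \<noteq> y \<Longrightarrow> r = 0"
  using hcomp_homog[of r x y] hcomp_homog[of r y y] by simp

lemma hcomp_add: "hcomp Rx y (r + s) = hcomp Rx y r + hcomp Rx y s"
proof -
  let ?A = "{y. hcomp Rx y r \<noteq> 0} \<union> {y. hcomp Rx y s \<noteq> 0}"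
  have fA: "finite ?A" using hcomp_fin by blast
  have "hdecomp Rx (r + s) (\<lambda>y. hcomp Rx y r + hcomp Rx y s)"
  proof (rule hdecompI[where A = ?A])
    show "hcomp Rx y r + hcomp Rx y s \<in> Rx y" for y using add_Rx hcomp_Rx by blast
    show "finite ?A" by (rule fA)
    show "{y. hcomp Rx y r + hcomp Rx y s \<noteq> 0} \<subseteq> ?A" by auto
    show "r + s = (\<Sum>y\<in>?A. hcomp Rx y r + hcomp Rx y s)"
      using hcomp_sum_sup[OF fA, of r] hcomp_sum_sup[OF fA, of s] by (simp add: sum.distrib)
  qed
  then show ?thesis using hcomp_eq by simp
qed

lemma hcomp_neg: "hcomp Rx y (- r) = - hcomp Rx y r"
proof -
  have "hdecomp Rx (- r) (\<lambda>y. - hcomp Rx y r)"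
  proof (rule hdecompI[where A = "{y. hcomp Rx y r \<noteq> 0}"])
    show "- hcomp Rx y r \<in> Rx y" for y using neg_Rx hcomp_Rx by blast
    show "finite {y. hcomp Rx y r \<noteq> 0}" by (rule hcomp_fin)
    show "{y. - hcomp Rx y r \<noteq> 0} \<subseteq> {y. hcomp Rx y r \<noteq> 0}" by auto
    show "- r = (\<Sum>y\<in>{y. hcomp Rx y r \<noteq> 0}. - hcomp Rx y r)"
      using hcomp_sum[of r] by (simp add: sum_negf)
  qed
  then show ?thesis using hcomp_eq by simp
qed

end

lemma add_subgroup_sum: assumes G: "add_subgroup G"
  shows "finite A \<Longrightarrow> (\<forall>a\<in>A. f a \<in> G) \<Longrightarrow> sum f A \<in> G"
proof (induction A rule: finite_induct)
  case empty then show ?case using G unfolding add_subgroup_def by simp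
next
  case (insert a A) then show ?case using G unfolding add_subgroup_def by simp
qed

definition addcl :: "'r::ring_1 set \<Rightarrow> 'r set" where
  "addcl S = \<Inter>{A. add_subgroup A \<and> S \<subseteq> A}"

lemma addcl_sub: "add_subgroup (addcl S)"
  unfolding addcl_def add_subgroup_def by auto
lemma addcl_inc: "S \<subseteq> addcl S"
  unfolding addcl_def by auto
lemma addcl_min: "add_subgroup A \<Longrightarrow> S \<subseteq> A \<Longrightarrow> addcl S \<subseteq> A"
  unfolding addcl_def by auto
lemma addcl_mono: "S \<subseteq> T \<Longrightarrow> addcl S \<subseteq> addcl T"
  unfolding addcl_def by auto

definition Hs :: "('g \<Rightarrow> 'r::ring_1 set) \<Rightarrow> ('g \<Rightarrow> 'r \<Rightarrow> 'm) \<Rightarrow> 'm set \<Rightarrow> 'r set" where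
  "Hs Rx phi I = {r. \<exists>x. r \<in> Rx x \<and> phi x r \<in> I}"

lemma restr_addcl: "restr Rx phi I = addcl (Hs Rx phi I)"
  unfolding restr_def addcl_def Hs_def ..




context graded_comm_2ring begin

lemma hideal_sub: "hideal_2r C I \<Longrightarrow> f \<in> I \<Longrightarrow> f \<in> arr C"
  unfolding hideal_2r_def by (drule conjunct1) (erule subsetD)
lemma hideal_zero: "hideal_2r C I \<Longrightarrow> a \<in> obj C \<Longrightarrow> b \<in> obj C \<Longrightarrow> mzero C a b \<in> I"
  unfolding hideal_2r_def by (drule conjunct2, drule conjunct1) simp
lemma hideal_add: "hideal_2r C I \<Longrightarrow> f \<in> I \<Longrightarrow> g \<in> I \<Longrightarrow> f \<in> hom C a b \<Longrightarrow> g \<in> hom C a b \<Longrightarrow> madd C f g \<in> I"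
  unfolding hideal_2r_def by (drule conjunct2, drule conjunct2, drule conjunct1) simp
lemma hideal_neg: "hideal_2r C I \<Longrightarrow> f \<in> I \<Longrightarrow> mneg C f \<in> I"
  unfolding hideal_2r_def by (drule conjunct2, drule conjunct2, drule conjunct2, drule conjunct1) simp
lemma hideal_cmpL: "hideal_2r C I \<Longrightarrow> f \<in> I \<Longrightarrow> g \<in> arr C \<Longrightarrow> src C g = tgt C f \<Longrightarrow> cmp C g f \<in> I"
  unfolding hideal_2r_def by (drule conjunct2, drule conjunct2, drule conjunct2, drule conjunct2, drule conjunct1) simp
lemma hideal_cmpR: "hideal_2r C I \<Longrightarrow> f \<in> I \<Longrightarrow> h \<in> arr C \<Longrightarrow> tgt C h = src C f \<Longrightarrow> cmp C f h \<in> I"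
  unfolding hideal_2r_def by (drule conjunct2, drule conjunct2, drule conjunct2, drule conjunct2, drule conjunct2, drule conjunct1) simp
lemma hideal_lt: "hideal_2r C I \<Longrightarrow> f \<in> I \<Longrightarrow> a \<in> obj C \<Longrightarrow> lt a f \<in> I"
  unfolding hideal_2r_def by (drule conjunct2, drule conjunct2, drule conjunct2, drule conjunct2, drule conjunct2, drule conjunct2) simp
lemma hideal_rt: "hideal_2r C I \<Longrightarrow> f \<in> I \<Longrightarrow> a \<in> obj C \<Longrightarrow> tmor C f (idm C a) \<in> I"
  unfolding hideal_2r_def by (drule conjunct2, drule conjunct2, drule conjunct2, drule conjunct2, drule conjunct2, drule conjunct2) simp

lemma hidealI: assumes s: "I \<subseteq> arr C" and z: "\<And>a b. a \<in> obj C \<Longrightarrow> b \<in> obj C \<Longrightarrow> mzero C a b \<in> I"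
  and ad: "\<And>a b f g. f \<in> I \<Longrightarrow> g \<in> I \<Longrightarrow> f \<in> hom C a b \<Longrightarrow> g \<in> hom C a b \<Longrightarrow> madd C f g \<in> I"
  and ng: "\<And>f. f \<in> I \<Longrightarrow> mneg C f \<in> I"
  and cl: "\<And>f g. f \<in> I \<Longrightarrow> g \<in> arr C \<Longrightarrow> src C g = tgt C f \<Longrightarrow> cmp C g f \<in> I"
  and cr: "\<And>f h. f \<in> I \<Longrightarrow> h \<in> arr C \<Longrightarrow> tgt C h = src C f \<Longrightarrow> cmp C f h \<in> I"
  and tl: "\<And>f a. f \<in> I \<Longrightarrow> a \<in> obj C \<Longrightarrow> lt a f \<in> I"
  and tr: "\<And>f a. f \<in> I \<Longrightarrow> a \<in> obj C \<Longrightarrow> tmor C f (idm C a) \<in> I"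
  shows "hideal_2r C I"
  unfolding hideal_2r_def
  apply (intro conjI)
  apply (rule s)
  apply (simp add: z)
  apply (intro allI impI; elim conjE IntE; rule ad; assumption)
  apply (intro ballI; rule ng; assumption)
  apply (intro ballI impI; rule cl; assumption)
  apply (intro ballI impI; rule cr; assumption)
  apply (intro ballI conjI; (rule tl | rule tr); assumption)
  done

lemma hideal_arr: "hideal_2r C (arr C)"
proof (rule hidealI)
  show "mzero C a b \<in> arr C" if "a \<in> obj C" "b \<in> obj C" for a b
    using mzero_hom[OF that] unfolding hom_def by blast
  show "madd C f g \<in> arr C" if "f \<in> hom C a b" "g \<in> hom C a b" for a b f g
    using madd_hom[OF that] unfolding hom_def by blast
  show "mneg C f \<in> arr C" if "f \<in> arr C" for f
    using mneg_hom[OF arr_hom[OF that]] unfolding hom_def by blast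
qed simp_all

lemma hideal_Inter: assumes ne: "F \<noteq> {}" and h: "\<And>K. K \<in> F \<Longrightarrow> hideal_2r C K"
  shows "hideal_2r C (\<Inter>F)"
proof (rule hidealI)
  obtain K0 where K0: "K0 \<in> F" using ne by blast
  show "\<Inter>F \<subseteq> arr C" using K0 hideal_sub[OF h[OF K0]] by blast
  show "mzero C a b \<in> \<Inter>F" if "a \<in> obj C" "b \<in> obj C" for a b
    using hideal_zero[OF h that] by blast
  show "madd C f g \<in> \<Inter>F" if "f \<in> \<Inter>F" "g \<in> \<Inter>F" "f \<in> hom C a b" "g \<in> hom C a b" for a b f g
    using that hideal_add[OF h] by blast
  show "mneg C f \<in> \<Inter>F" if "f \<in> \<Inter>F" for f using that hideal_neg[OF h] by blast
  show "cmp C g f \<in> \<Inter>F" if "f \<in> \<Inter>F" "g \<in> arr C" "src C g = tgt C f" for f g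
    using that hideal_cmpL[OF h] by blast
  show "cmp C f g \<in> \<Inter>F" if "f \<in> \<Inter>F" "g \<in> arr C" "tgt C g = src C f" for f g
    using that hideal_cmpR[OF h] by blast
  show "lt a f \<in> \<Inter>F" if "f \<in> \<Inter>F" "a \<in> obj C" for f a using that hideal_lt[OF h] by blast
  show "tmor C f (idm C a) \<in> \<Inter>F" if "f \<in> \<Inter>F" "a \<in> obj C" for f a using that hideal_rt[OF h] by blast
qed

end

lemma hideal_gr_UNIV: "hideal_gr Rx UNIV"
  unfolding hideal_gr_def add_subgroup_def by simp

lemma hideal_gr_Inter: "(\<And>J. J \<in> F \<Longrightarrow> hideal_gr Rx J) \<Longrightarrow> hideal_gr Rx (\<Inter>F)"
  unfolding hideal_gr_def add_subgroup_def by blast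

lemma hideal_gr_sub: "hideal_gr Rx J \<Longrightarrow> add_subgroup J"
  unfolding hideal_gr_def by blast
lemma hideal_gr_hcomp: "hideal_gr Rx J \<Longrightarrow> r \<in> J \<Longrightarrow> hcomp Rx x r \<in> J"
  unfolding hideal_gr_def by blast

lemma add_subgroupD: "add_subgroup A \<Longrightarrow> 0 \<in> A" "add_subgroup A \<Longrightarrow> a \<in> A \<Longrightarrow> b \<in> A \<Longrightarrow> a + b \<in> A"
  "add_subgroup A \<Longrightarrow> a \<in> A \<Longrightarrow> - a \<in> A"
  unfolding add_subgroup_def by blast+

context tightening begin

lemma phi_zero: "phi x 0 = mzero C (uobj C) (gr (pi x))"
proof -
  have "phi x (0 + 0) = madd C (phi x 0) (phi x 0)" using phi_add[of 0 x 0] by simp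
  then show ?thesis using idem_zero[OF phi_hom'[OF zero_Rx]] by simp
qed

lemma H_iff: assumes I: "hideal_2r C I" and h: "h \<in> Rx y" shows "h \<in> Hs Rx phi I \<longleftrightarrow> phi y h \<in> I"
proof
  assume "h \<in> Hs Rx phi I"
  then obtain x where x: "h \<in> Rx x" "phi x h \<in> I" unfolding Hs_def by blast
  show "phi y h \<in> I"
  proof (cases "x = y")
    case True then show ?thesis using x by simp
  next
    case False
    then have "h = 0" using Rx_disj[OF x(1) h] by simp
    then show ?thesis using hideal_zero[OF I] phi_zero by simp
  qed
next
  assume "phi y h \<in> I" then show "h \<in> Hs Rx phi I" using h unfolding Hs_def by blast
qed

lemma zero_H: "hideal_2r C I \<Longrightarrow> 0 \<in> Hs Rx phi I"
  using H_iff[of I 0 0] hideal_zero phi_zero by simp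

lemma H_add: assumes I: "hideal_2r C I" and a: "a \<in> Rx y" "a \<in> Hs Rx phi I" and b: "b \<in> Rx y" "b \<in> Hs Rx phi I"
  shows "a + b \<in> Hs Rx phi I"
proof -
  have "phi y a \<in> I" "phi y b \<in> I" using H_iff[OF I] a b by blast+
  then have "madd C (phi y a) (phi y b) \<in> I" using hideal_add[OF I _ _ phi_hom' phi_hom'] a b by blast
  then show ?thesis using phi_add[OF a(1) b(1)] H_iff[OF I add_Rx[OF a(1) b(1)]] by simp
qed

lemma minus_one_Rx: "- 1 \<in> Rx 0" using neg_Rx[OF one_deg] .

lemma H_neg: assumes I: "hideal_2r C I" and a: "a \<in> Rx y" "a \<in> Hs Rx phi I"
  shows "- a \<in> Hs Rx phi I"
proof -
  have pa: "phi y a \<in> I" using H_iff[OF I] a by blast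
  have "cmp C (phi y a) (phi 0 (- 1)) \<in> I"
    using hideal_cmpR[OF I pa phi_arr[OF minus_one_Rx]] a minus_one_Rx by simp
  then have "phi y (a * - 1) \<in> I" using phi_mult_deg0[OF a(1) minus_one_Rx] by simp
  then show ?thesis using H_iff[OF I neg_Rx[OF a(1)]] by simp
qed

lemma restr_char: assumes I: "hideal_2r C I"
  shows "restr Rx phi I = {r. \<forall>y. hcomp Rx y r \<in> Hs Rx phi I}"
proof
  let ?H' = "{r. \<forall>y. hcomp Rx y r \<in> Hs Rx phi I}"
  have "add_subgroup ?H'"
    unfolding add_subgroup_def
    using zero_H[OF I] H_add[OF I hcomp_Rx _ hcomp_Rx] H_neg[OF I hcomp_Rx]
    by (simp add: hcomp_add hcomp_neg hcomp_homog[OF zero_Rx[of 0]])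
  moreover have "Hs Rx phi I \<subseteq> ?H'"
  proof
    fix r assume r: "r \<in> Hs Rx phi I"
    then obtain x where x: "r \<in> Rx x" unfolding Hs_def by blast
    show "r \<in> ?H'" using hcomp_homog[OF x] r zero_H[OF I] by simp
  qed
  ultimately show "restr Rx phi I \<subseteq> ?H'" unfolding restr_addcl by (rule addcl_min)
next
  show "{r. \<forall>y. hcomp Rx y r \<in> Hs Rx phi I} \<subseteq> restr Rx phi I"
  proof
    fix r assume r: "r \<in> {r. \<forall>y. hcomp Rx y r \<in> Hs Rx phi I}"
    have "(\<Sum>y\<in>{y. hcomp Rx y r \<noteq> 0}. hcomp Rx y r) \<in> restr Rx phi I"
      unfolding restr_addcl
      using r addcl_inc hcomp_fin by (intro add_subgroup_sum[OF addcl_sub]) blast+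
    then show "r \<in> restr Rx phi I" using hcomp_sum[of r] by simp
  qed
qed


lemma homog_prod: assumes I: "hideal_2r C I" and h: "h \<in> Rx x" "phi x h \<in> I" and a: "a \<in> Rx y"
  shows "phi (y + x) (a * h) \<in> I" "phi (x + y) (h * a) \<in> I"
proof -
  have "cmp C (inv_arr C (lun C (gr (pi x)))) (phi x h) \<in> I"
    using hideal_cmpL[OF I h(2)] h(1) by simp
  then have "cmp C (tmor C (phi y a) (idm C (gr (pi x)))) (cmp C (inv_arr C (lun C (gr (pi x)))) (phi x h)) \<in> I"
    using hideal_cmpL[OF I] h(1) a by simp
  then show "phi (y + x) (a * h) \<in> I"
    using hideal_tr'[OF I _ phi_mult[OF a h(1)]] Rx_mult[OF a h(1)] by simp
  have "tmor C (phi x h) (idm C (gr (pi y))) \<in> I" using hideal_rt[OF I h(2)] by simp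
  then have "cmp C (tmor C (phi x h) (idm C (gr (pi y)))) (cmp C (inv_arr C (lun C (gr (pi y)))) (phi y a)) \<in> I"
    using hideal_cmpR[OF I] h(1) a by simp
  then show "phi (x + y) (h * a) \<in> I"
    using hideal_tr'[OF I _ phi_mult[OF h(1) a]] Rx_mult[OF h(1) a] by simp
qed

lemma Hs_restr: "Hs Rx phi I \<subseteq> restr Rx phi I"
  unfolding restr_addcl by (rule addcl_inc)

lemma restr_sub: "add_subgroup (restr Rx phi I)"
  unfolding restr_addcl by (rule addcl_sub)

lemma restr_hideal: assumes I: "hideal_2r C I" shows "hideal_gr Rx (restr Rx phi I)"
proof -
  let ?R = "restr Rx phi I"
  let ?M = "{r. \<forall>a. a * r \<in> ?R \<and> r * a \<in> ?R}"
  have sM: "add_subgroup ?M"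
    using restr_sub unfolding add_subgroup_def by (simp add: distrib_left distrib_right)
  have HM: "Hs Rx phi I \<subseteq> ?M"
  proof
    fix h assume "h \<in> Hs Rx phi I"
    then obtain x where h: "h \<in> Rx x" "phi x h \<in> I" unfolding Hs_def by blast
    show "h \<in> ?M"
    proof (intro CollectI allI conjI)
      fix a
      have "a * h = (\<Sum>y\<in>{y. hcomp Rx y a \<noteq> 0}. hcomp Rx y a * h)"
        using hcomp_sum[of a] by (metis sum_distrib_right)
      moreover have "(\<Sum>y\<in>{y. hcomp Rx y a \<noteq> 0}. hcomp Rx y a * h) \<in> ?R"
      proof (rule add_subgroup_sum[OF restr_sub hcomp_fin], intro ballI)
        fix y
        have "phi (y + x) (hcomp Rx y a * h) \<in> I" using homog_prod(1)[OF I h hcomp_Rx] .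
        then have "hcomp Rx y a * h \<in> Hs Rx phi I" unfolding Hs_def using Rx_mult[OF hcomp_Rx h(1)] by blast
        then show "hcomp Rx y a * h \<in> ?R" using Hs_restr by blast
      qed
      ultimately show "a * h \<in> ?R" by simp
      have "h * a = (\<Sum>y\<in>{y. hcomp Rx y a \<noteq> 0}. h * hcomp Rx y a)"
        using hcomp_sum[of a] by (metis sum_distrib_left)
      moreover have "(\<Sum>y\<in>{y. hcomp Rx y a \<noteq> 0}. h * hcomp Rx y a) \<in> ?R"
      proof (rule add_subgroup_sum[OF restr_sub hcomp_fin], intro ballI)
        fix y
        have "phi (x + y) (h * hcomp Rx y a) \<in> I" using homog_prod(2)[OF I h hcomp_Rx] .
        then have "h * hcomp Rx y a \<in> Hs Rx phi I" unfolding Hs_def using Rx_mult[OF h(1) hcomp_Rx] by blast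
        then show "h * hcomp Rx y a \<in> ?R" using Hs_restr by blast
      qed
      ultimately show "h * a \<in> ?R" by simp
    qed
  qed
  have RM: "?R \<subseteq> ?M" unfolding restr_addcl using addcl_min[OF sM] HM unfolding restr_addcl by blast
  have hc: "hcomp Rx x r \<in> ?R" if "r \<in> ?R" for r x
    using that restr_char[OF I] Hs_restr by blast
  show ?thesis unfolding hideal_gr_def using restr_sub RM hc by blast
qed

lemma gens_arr: "{phi x r |x r. r \<in> Rx x \<and> r \<in> S} \<subseteq> arr C"
  by auto

lemma extn_hideal_gen: "hideal_2r C (extn C Rx phi S)"
  unfolding extn_def using hideal_arr gens_arr by (intro hideal_Inter) auto

lemma extn_gen: "r \<in> Rx x \<Longrightarrow> r \<in> S \<Longrightarrow> phi x r \<in> extn C Rx phi S"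
  unfolding extn_def by blast

lemma extn_min: "hideal_2r C K \<Longrightarrow> (\<And>x r. r \<in> Rx x \<Longrightarrow> r \<in> S \<Longrightarrow> phi x r \<in> K) \<Longrightarrow> extn C Rx phi S \<subseteq> K"
  unfolding extn_def by blast

lemma extn_mono: "S \<subseteq> T \<Longrightarrow> extn C Rx phi S \<subseteq> extn C Rx phi T"
  unfolding extn_def by blast

lemma restr_mono: "S \<subseteq> T \<Longrightarrow> restr Rx phi S \<subseteq> restr Rx phi T"
  unfolding restr_addcl Hs_def by (intro addcl_mono) blast

lemma restr_homog: assumes I: "hideal_2r C I" and r: "r \<in> Rx x" "r \<in> restr Rx phi I"
  shows "phi x r \<in> I"
proof -
  have "hcomp Rx x r \<in> Hs Rx phi I" using r(2) restr_char[OF I] by blast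
  then have "r \<in> Hs Rx phi I" using hcomp_homog[OF r(1)] by simp
  then show ?thesis using H_iff[OF I r(1)] by blast
qed

lemma part1: assumes I: "hideal_2r C I"
  shows "extn C Rx phi (restr Rx phi I) = I"
proof
  show "extn C Rx phi (restr Rx phi I) \<subseteq> I"
    using restr_homog[OF I] by (intro extn_min[OF I])
  show "I \<subseteq> extn C Rx phi (restr Rx phi I)"
  proof
    fix f assume f: "f \<in> I"
    obtain x r where r: "r \<in> Rx x" "translate C f (phi x r)" using every_tr[OF hideal_sub[OF I f]] by blast
    have "phi x r \<in> I" using hideal_tr'[OF I f r(2)] r(1) by simp
    then have "r \<in> restr Rx phi I" using Hs_restr r(1) unfolding Hs_def by blast
    then have "phi x r \<in> extn C Rx phi (restr Rx phi I)" using extn_gen r(1) by blast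
    then show "f \<in> extn C Rx phi (restr Rx phi I)" using hideal_tr[OF extn_hideal_gen _ r(2)] by blast
  qed
qed


definition Dset where "Dset J = {f \<in> arr C. \<forall>x r. r \<in> Rx x \<longrightarrow> translate C f (phi x r) \<longrightarrow> r \<in> J}"

lemma D_arr: "f \<in> Dset J \<Longrightarrow> f \<in> arr C" unfolding Dset_def by blast

lemma D_tr: assumes f: "f \<in> Dset J" and t: "translate C f f'" and f': "f' \<in> arr C" shows "f' \<in> Dset J"
  unfolding Dset_def using f' f tr_trans[OF t] unfolding Dset_def by auto

lemma D_tr': "f \<in> Dset J \<Longrightarrow> translate C f' f \<Longrightarrow> f' \<in> arr C \<Longrightarrow> f' \<in> Dset J"
  using D_tr tr_sym D_arr by blast

lemma D_gen: assumes J: "hideal_gr Rx J" and r: "r \<in> Rx x" "r \<in> J" shows "phi x r \<in> Dset J"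
  unfolding Dset_def using r transfer[OF J r] tr_sym by auto

lemma D_coef: "phi x r \<in> Dset J \<Longrightarrow> r \<in> Rx x \<Longrightarrow> r \<in> J"
  unfolding Dset_def using tr_refl by auto

lemma F_add: assumes a: "a \<in> obj C" and v: "iso_arr C v" "src C v = tobj C a (gr (pi x))" and r: "r \<in> Rx x" "s \<in> Rx x"
  shows "cmp C v (cmp C (lt a (phi x (r + s))) (inv_arr C (run C a))) =
    madd C (cmp C v (cmp C (lt a (phi x r)) (inv_arr C (run C a)))) (cmp C v (cmp C (lt a (phi x s)) (inv_arr C (run C a))))"
proof -
  have "lt a (phi x (r + s)) = madd C (lt a (phi x r)) (lt a (phi x s))"
    using phi_add[OF r] lt_madd[OF a, of "phi x r" "phi x s"] r by simp
  moreover have "cmp C (madd C (lt a (phi x r)) (lt a (phi x s))) (inv_arr C (run C a)) =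
      madd C (cmp C (lt a (phi x r)) (inv_arr C (run C a))) (cmp C (lt a (phi x s)) (inv_arr C (run C a)))"
    using cmp_madd_l[of "inv_arr C (run C a)" "lt a (phi x r)" "lt a (phi x s)"] a r by simp
  moreover have "cmp C v (madd C (cmp C (lt a (phi x r)) (inv_arr C (run C a))) (cmp C (lt a (phi x s)) (inv_arr C (run C a)))) =
      madd C (cmp C v (cmp C (lt a (phi x r)) (inv_arr C (run C a)))) (cmp C v (cmp C (lt a (phi x s)) (inv_arr C (run C a))))"
    using cmp_madd_r[of "cmp C (lt a (phi x r)) (inv_arr C (run C a))" "cmp C (lt a (phi x s)) (inv_arr C (run C a))" v] a r v by simp
  ultimately show ?thesis by simp
qed

lemma F_D: assumes J: "hideal_gr Rx J" and a: "a \<in> obj C" and v: "iso_arr C v" "src C v = tobj C a (gr (pi x))" and r: "r \<in> Rx x"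
  shows "cmp C v (cmp C (lt a (phi x r)) (inv_arr C (run C a))) \<in> Dset J \<longleftrightarrow> r \<in> J"
proof
  have t: "translate C (cmp C v (cmp C (lt a (phi x r)) (inv_arr C (run C a)))) (phi x r)" using NF_tr[OF a r v] .
  {
    assume "cmp C v (cmp C (lt a (phi x r)) (inv_arr C (run C a))) \<in> Dset J"
    then show "r \<in> J" using t r unfolding Dset_def by blast
  }
  {
    assume "r \<in> J"
    then show "cmp C v (cmp C (lt a (phi x r)) (inv_arr C (run C a))) \<in> Dset J"
      using D_tr'[OF D_gen[OF J r] t] a r v by simp
  }
qed

lemma D_hideal: assumes J: "hideal_gr Rx J" shows "hideal_2r C (Dset J)"
proof (rule hidealI)
  have sJ: "add_subgroup J" using hideal_gr_sub[OF J] .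
  show "Dset J \<subseteq> arr C" using D_arr by blast
  {
    fix a b assume ab: "a \<in> obj C" "b \<in> obj C"
    obtain x v where v: "iso_arr C v" "src C v = tobj C a (gr (pi x))" "tgt C v = b"
      and bj: "bij_betw (\<lambda>r. cmp C v (cmp C (lt a (phi x r)) (inv_arr C (run C a)))) (Rx x) (hom C a b)"
      using NF[OF ab] by blast
    let ?F = "\<lambda>r. cmp C v (cmp C (lt a (phi x r)) (inv_arr C (run C a)))"
    have inj: "r = s" if "r \<in> Rx x" "s \<in> Rx x" "?F r = ?F s" for r s
      using bij_betw_imp_inj_on[OF bj] that unfolding inj_on_def by blast
    have surj: "\<exists>r\<in>Rx x. f = ?F r" if "f \<in> hom C a b" for f
      using bij_betw_imp_surj_on[OF bj] that by blast
    have Fhom: "?F r \<in> hom C a b" if "r \<in> Rx x" for r using bij_betw_apply[OF bj that] .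
    have F0: "?F 0 = mzero C a b"
      using idem_zero[OF Fhom[OF zero_Rx]] F_add[OF ab(1) v(1,2) zero_Rx zero_Rx] by simp
    have Fadd: "?F (r + s) = madd C (?F r) (?F s)" if "r \<in> Rx x" "s \<in> Rx x" for r s
      using F_add[OF ab(1) v(1,2) that] .
    have FD: "?F r \<in> Dset J \<longleftrightarrow> r \<in> J" if "r \<in> Rx x" for r using F_D[OF J ab(1) v(1,2) that] .
    have "mzero C a b \<in> Dset J" using FD[OF zero_Rx] F0 add_subgroupD(1)[OF sJ] by simp
    moreover have "madd C f g \<in> Dset J" if A: "f \<in> Dset J" "g \<in> Dset J" "f \<in> hom C a b" "g \<in> hom C a b" for f g
    proof -
      obtain r where r: "r \<in> Rx x" "f = ?F r" using surj A(3) by blast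
      obtain s where s: "s \<in> Rx x" "g = ?F s" using surj A(4) by blast
      have "r \<in> J" "s \<in> J" using FD r s A by auto
      then have "r + s \<in> J" using add_subgroupD(2)[OF sJ] by blast
      then show ?thesis using FD[OF add_Rx[OF r(1) s(1)]] Fadd[OF r(1) s(1)] r s by simp
    qed
    moreover have "mneg C f \<in> Dset J" if A: "f \<in> Dset J" "f \<in> hom C a b" for f
    proof -
      obtain r where r: "r \<in> Rx x" "f = ?F r" using surj A(2) by blast
      obtain s where s: "s \<in> Rx x" "mneg C f = ?F s" using surj mneg_hom[OF A(2)] by blast
      have "?F (r + s) = ?F 0"
        using Fadd[OF r(1) s(1)] r(2)[symmetric] s(2)[symmetric] madd_neg[OF A(2)] F0 by simp
      then have "r + s = 0" using inj add_Rx[OF r(1) s(1)] zero_Rx by blast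
      then have "s = - r" by (simp add: eq_neg_iff_add_eq_0 add.commute)
      moreover have "r \<in> J" using FD r A by auto
      ultimately have "s \<in> J" using add_subgroupD(3)[OF sJ] by blast
      then show ?thesis using FD[OF s(1)] s(2) by simp
    qed
    ultimately have "mzero C a b \<in> Dset J"
      "\<And>f g. f \<in> Dset J \<Longrightarrow> g \<in> Dset J \<Longrightarrow> f \<in> hom C a b \<Longrightarrow> g \<in> hom C a b \<Longrightarrow> madd C f g \<in> Dset J"
      "\<And>f. f \<in> Dset J \<Longrightarrow> f \<in> hom C a b \<Longrightarrow> mneg C f \<in> Dset J" by blast+
  } note abl = this
  show "mzero C a b \<in> Dset J" if "a \<in> obj C" "b \<in> obj C" for a b using abl(1)[OF that] .
  show "madd C f g \<in> Dset J" if "f \<in> Dset J" "g \<in> Dset J" "f \<in> hom C a b" "g \<in> hom C a b" for a b f g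
  proof -
    have "a \<in> obj C" "b \<in> obj C" using that(3) unfolding hom_def by auto
    then show ?thesis using abl(2) that by blast
  qed
  show "mneg C f \<in> Dset J" if "f \<in> Dset J" for f
  proof -
    have fa: "f \<in> arr C" using D_arr[OF that] .
    then have "src C f \<in> obj C" "tgt C f \<in> obj C" by auto
    then show ?thesis using abl(3) that arr_hom[OF fa] by blast
  qed
  show "cmp C g f \<in> Dset J" if A: "f \<in> Dset J" "g \<in> arr C" "src C g = tgt C f" for f g
  proof -
    have fa: "f \<in> arr C" using D_arr[OF A(1)] .
    obtain x r y s where rs: "r \<in> Rx x" "s \<in> Rx y" "translate C f (phi x r)" "translate C g (phi y s)"
      "translate C (cmp C g f) (phi (y + x) (s * r))"
      using COMP[OF fa A(2,3)] by blast
    have "r \<in> J" using A(1) rs unfolding Dset_def by blast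
    then have "s * r \<in> J" using hideal_grD[OF J] by blast
    then have "phi (y + x) (s * r) \<in> Dset J" using D_gen[OF J Rx_mult[OF rs(2,1)]] by blast
    then show ?thesis using D_tr'[OF _ rs(5)] fa A by simp
  qed
  show "cmp C f h \<in> Dset J" if A: "f \<in> Dset J" "h \<in> arr C" "tgt C h = src C f" for f h
  proof -
    have fa: "f \<in> arr C" using D_arr[OF A(1)] .
    obtain x r y s where rs: "r \<in> Rx x" "s \<in> Rx y" "translate C h (phi x r)" "translate C f (phi y s)"
      "translate C (cmp C f h) (phi (y + x) (s * r))"
      using COMP[OF A(2) fa A(3)[symmetric]] by blast
    have "s \<in> J" using A(1) rs unfolding Dset_def by blast
    then have "s * r \<in> J" using hideal_grD[OF J] by blast
    then have "phi (y + x) (s * r) \<in> Dset J" using D_gen[OF J Rx_mult[OF rs(2,1)]] by blast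
    then show ?thesis using D_tr'[OF _ rs(5)] fa A by simp
  qed
  show "lt a f \<in> Dset J" if "f \<in> Dset J" "a \<in> obj C" for f a
    using D_tr'[OF that(1) tr_lt[OF that(2) D_arr[OF that(1)]]] D_arr[OF that(1)] that(2) by simp
  show "tmor C f (idm C a) \<in> Dset J" if "f \<in> Dset J" "a \<in> obj C" for f a
    using D_tr'[OF that(1) tr_rt[OF that(2) D_arr[OF that(1)]]] D_arr[OF that(1)] that(2) by simp
qed

lemma extn_D: assumes J: "hideal_gr Rx J" shows "extn C Rx phi J = Dset J"
proof
  show "extn C Rx phi J \<subseteq> Dset J" using D_gen[OF J] by (intro extn_min[OF D_hideal[OF J]])
  show "Dset J \<subseteq> extn C Rx phi J"
  proof
    fix f assume f: "f \<in> Dset J"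
    obtain x r where r: "r \<in> Rx x" "translate C f (phi x r)" using every_tr[OF D_arr[OF f]] by blast
    have "r \<in> J" using f r unfolding Dset_def by blast
    then have "phi x r \<in> extn C Rx phi J" using extn_gen r(1) by blast
    then show "f \<in> extn C Rx phi J" using hideal_tr[OF extn_hideal_gen _ r(2)] by blast
  qed
qed

lemma part2: assumes J: "hideal_gr Rx J" shows "restr Rx phi (extn C Rx phi J) = J"
proof
  show "restr Rx phi (extn C Rx phi J) \<subseteq> J"
    unfolding restr_addcl
  proof (rule addcl_min[OF hideal_gr_sub[OF J]])
    show "Hs Rx phi (extn C Rx phi J) \<subseteq> J"
      unfolding Hs_def extn_D[OF J] using D_coef by blast
  qed
  show "J \<subseteq> restr Rx phi (extn C Rx phi J)"
  proof
    fix r assume r: "r \<in> J"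
    have "(\<Sum>y\<in>{y. hcomp Rx y r \<noteq> 0}. hcomp Rx y r) \<in> restr Rx phi (extn C Rx phi J)"
    proof (rule add_subgroup_sum[OF restr_sub hcomp_fin], intro ballI)
      fix y
      have "phi y (hcomp Rx y r) \<in> extn C Rx phi J" using extn_gen[OF hcomp_Rx hideal_gr_hcomp[OF J r]] .
      then show "hcomp Rx y r \<in> restr Rx phi (extn C Rx phi J)" using Hs_restr hcomp_Rx unfolding Hs_def by blast
    qed
    then show "r \<in> restr Rx phi (extn C Rx phi J)" using hcomp_sum[of r] by simp
  qed
qed


lemma prime_extn: assumes P: "hprime_gr Rx P" shows "prime_2r C (extn C Rx phi P)"
proof -
  have J: "hideal_gr Rx P" "P \<noteq> UNIV" and pr: "\<And>x y r s. r \<in> Rx x \<Longrightarrow> s \<in> Rx y \<Longrightarrow> r * s \<in> P \<Longrightarrow> r \<in> P \<or> s \<in> P"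
    using P unfolding hprime_gr_def by blast+
  have E: "extn C Rx phi P = Dset P" using extn_D[OF J(1)] .
  have ne: "extn C Rx phi P \<noteq> arr C"
  proof
    assume "extn C Rx phi P = arr C"
    then have "phi 0 1 \<in> Dset P" using E phi_arr[OF one_deg] by simp
    then have "1 \<in> P" using D_coef one_deg by blast
    then have "a \<in> P" for a using hideal_grD[OF J(1), of 1 a] by simp
    then show False using J(2) by blast
  qed
  have "s \<in> extn C Rx phi P \<or> r \<in> extn C Rx phi P"
    if A: "r \<in> arr C" "s \<in> arr C" "src C s = tgt C r" "cmp C s r \<in> extn C Rx phi P" for r s
  proof -
    obtain x r' y s' where rs: "r' \<in> Rx x" "s' \<in> Rx y" "translate C r (phi x r')" "translate C s (phi y s')"
      "translate C (cmp C s r) (phi (y + x) (s' * r'))"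
      using COMP[OF A(1,2,3)] by blast
    have "s' * r' \<in> P" using A(4) rs(5) Rx_mult[OF rs(2,1)] unfolding E Dset_def by blast
    then have "s' \<in> P \<or> r' \<in> P" using pr[OF rs(2,1)] by blast
    then show ?thesis
    proof
      assume "s' \<in> P" then show ?thesis using D_tr'[OF D_gen[OF J(1) rs(2)] rs(4) A(2)] E by simp
    next
      assume "r' \<in> P" then show ?thesis using D_tr'[OF D_gen[OF J(1) rs(1)] rs(3) A(1)] E by simp
    qed
  qed
  then show ?thesis unfolding prime_2r_def using extn_hideal_gen ne by blast
qed

lemma prime_restr: assumes Q: "prime_2r C Q" shows "hprime_gr Rx (restr Rx phi Q)"
proof -
  have I: "hideal_2r C Q" and ne: "Q \<noteq> arr C"
    and pr: "\<And>r s. r \<in> arr C \<Longrightarrow> s \<in> arr C \<Longrightarrow> src C s = tgt C r \<Longrightarrow> cmp C s r \<in> Q \<Longrightarrow> s \<in> Q \<or> r \<in> Q"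
    using Q unfolding prime_2r_def by blast+
  have neU: "restr Rx phi Q \<noteq> UNIV"
  proof
    assume U: "restr Rx phi Q = UNIV"
    have "arr C \<subseteq> Q"
    proof
      fix f assume f: "f \<in> arr C"
      obtain x r where r: "r \<in> Rx x" "translate C f (phi x r)" using every_tr[OF f] by blast
      have "phi x r \<in> Q" using restr_homog[OF I r(1)] U by simp
      then show "f \<in> Q" using hideal_tr[OF I _ r(2)] by blast
    qed
    then show False using ne hideal_sub[OF I] by blast
  qed
  have "r \<in> restr Rx phi Q \<or> s \<in> restr Rx phi Q"
    if A: "r \<in> Rx x" "s \<in> Rx y" "r * s \<in> restr Rx phi Q" for x y r s
  proof -
    have "phi (x + y) (r * s) \<in> Q" using restr_homog[OF I Rx_mult[OF A(1,2)] A(3)] .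
    then have c: "cmp C (tmor C (phi x r) (idm C (gr (pi y)))) (cmp C (inv_arr C (lun C (gr (pi y)))) (phi y s)) \<in> Q"
      using hideal_tr[OF I _ phi_mult[OF A(1,2)]] by blast
    have "tmor C (phi x r) (idm C (gr (pi y))) \<in> Q \<or> cmp C (inv_arr C (lun C (gr (pi y)))) (phi y s) \<in> Q"
      using pr[OF _ _ _ c] A by simp
    then show ?thesis
    proof
      assume "tmor C (phi x r) (idm C (gr (pi y))) \<in> Q"
      then have "phi x r \<in> Q" using hideal_tr'[OF I _ tr_rt[OF gr_obj phi_arr[OF A(1)]]] A(1) by simp
      then show ?thesis using Hs_restr A(1) unfolding Hs_def by blast
    next
      assume c2: "cmp C (inv_arr C (lun C (gr (pi y)))) (phi y s) \<in> Q"
      have "cmp C (lun C (gr (pi y))) (cmp C (inv_arr C (lun C (gr (pi y)))) (phi y s)) \<in> Q"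
        using hideal_cmpL[OF I c2 lun_arr[OF gr_obj[of y]]] A(2) by simp
      then have "phi y s \<in> Q" using A(2) by simp
      then show ?thesis using Hs_restr A(2) unfolding Hs_def by blast
    qed
  qed
  then show ?thesis unfolding hprime_gr_def using restr_hideal[OF I] neU by blast
qed

lemma hprime_hideal: "hprime_gr Rx P \<Longrightarrow> hideal_gr Rx P" unfolding hprime_gr_def by blast
lemma prime_hideal: "prime_2r C Q \<Longrightarrow> hideal_2r C Q" unfolding prime_2r_def by blast

lemma top_Spec: "topspace (Spec_h Rx) = {P. hprime_gr Rx P}"
  unfolding Spec_h_def topology_generated_by_topspace
proof
  show "{P. hprime_gr Rx P} \<subseteq> \<Union> {{P. hprime_gr Rx P \<and> \<not> S \<subseteq> P} |S. True}"
  proof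
    fix P assume "P \<in> {P. hprime_gr Rx P}"
    then have "P \<in> {P. hprime_gr Rx P \<and> \<not> UNIV \<subseteq> P}" unfolding hprime_gr_def by auto
    then show "P \<in> \<Union> {{P. hprime_gr Rx P \<and> \<not> S \<subseteq> P} |S. True}" by blast
  qed
qed blast

lemma top_Spc: "topspace (Spc C) = {P. prime_2r C P}"
  unfolding Spc_def topology_generated_by_topspace
proof
  show "{P. prime_2r C P} \<subseteq> \<Union> {{P. prime_2r C P \<and> \<not> S \<subseteq> P} |S. S \<subseteq> arr C}"
  proof
    fix P assume "P \<in> {P. prime_2r C P}"
    then have "P \<in> {P. prime_2r C P \<and> \<not> arr C \<subseteq> P}" unfolding prime_2r_def hideal_2r_def by auto
    then show "P \<in> \<Union> {{P. prime_2r C P \<and> \<not> S \<subseteq> P} |S. S \<subseteq> arr C}" by blast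
  qed
qed blast

lemma cont_extn: "continuous_map (Spec_h Rx) (Spc C) (extn C Rx phi)"
  unfolding Spc_def
proof (rule continuous_on_generated_topo)
  show "extn C Rx phi ` topspace (Spec_h Rx) \<subseteq> \<Union> {{P. prime_2r C P \<and> \<not> S \<subseteq> P} |S. S \<subseteq> arr C}"
    using top_Spc prime_extn unfolding top_Spec Spc_def by auto
  fix U assume "U \<in> {{P. prime_2r C P \<and> \<not> S \<subseteq> P} |S. S \<subseteq> arr C}"
  then obtain S where S: "S \<subseteq> arr C" and U: "U = {P. prime_2r C P \<and> \<not> S \<subseteq> P}" by blast
  define KS where "KS = \<Inter>{K. hideal_2r C K \<and> S \<subseteq> K}"
  have KS: "hideal_2r C KS" unfolding KS_def using hideal_arr S by (intro hideal_Inter) auto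
  have SK: "S \<subseteq> KS" unfolding KS_def by blast
  let ?T = "restr Rx phi KS"
  have eq: "S \<subseteq> extn C Rx phi P \<longleftrightarrow> ?T \<subseteq> P" if P: "hprime_gr Rx P" for P
  proof
    assume "S \<subseteq> extn C Rx phi P"
    then have "KS \<subseteq> extn C Rx phi P" unfolding KS_def using extn_hideal_gen by blast
    then have "?T \<subseteq> restr Rx phi (extn C Rx phi P)" by (rule restr_mono)
    then show "?T \<subseteq> P" using part2[OF hprime_hideal[OF P]] by simp
  next
    assume "?T \<subseteq> P"
    then have "extn C Rx phi ?T \<subseteq> extn C Rx phi P" by (rule extn_mono)
    then show "S \<subseteq> extn C Rx phi P" using part1[OF KS] SK by simp
  qed
  have "extn C Rx phi -` U \<inter> topspace (Spec_h Rx) = {P. hprime_gr Rx P \<and> \<not> ?T \<subseteq> P}"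
    unfolding U top_Spec using eq prime_extn by auto
  then show "openin (Spec_h Rx) (extn C Rx phi -` U \<inter> topspace (Spec_h Rx))"
    unfolding Spec_h_def by (auto intro: topology_generated_by_Basis)
qed

lemma cont_restr: "continuous_map (Spc C) (Spec_h Rx) (restr Rx phi)"
  unfolding Spec_h_def
proof (rule continuous_on_generated_topo)
  show "restr Rx phi ` topspace (Spc C) \<subseteq> \<Union> {{P. hprime_gr Rx P \<and> \<not> S \<subseteq> P} |S. True}"
    using top_Spec prime_restr unfolding top_Spc Spec_h_def by auto
  fix U assume "U \<in> {{P. hprime_gr Rx P \<and> \<not> S \<subseteq> P} |S. True}"
  then obtain S where U: "U = {P. hprime_gr Rx P \<and> \<not> S \<subseteq> P}" by blast
  define JS where "JS = \<Inter>{J. hideal_gr Rx J \<and> S \<subseteq> J}"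
  have JS: "hideal_gr Rx JS" unfolding JS_def by (rule hideal_gr_Inter) blast
  have SJ: "S \<subseteq> JS" unfolding JS_def by blast
  let ?T = "extn C Rx phi JS"
  have Ta: "?T \<subseteq> arr C" using hideal_sub[OF extn_hideal_gen] by blast
  have eq: "S \<subseteq> restr Rx phi Q \<longleftrightarrow> ?T \<subseteq> Q" if Q: "prime_2r C Q" for Q
  proof
    assume "S \<subseteq> restr Rx phi Q"
    then have "JS \<subseteq> restr Rx phi Q" unfolding JS_def using restr_hideal[OF prime_hideal[OF Q]] by blast
    then have "?T \<subseteq> extn C Rx phi (restr Rx phi Q)" by (rule extn_mono)
    then show "?T \<subseteq> Q" using part1[OF prime_hideal[OF Q]] by simp
  next
    assume "?T \<subseteq> Q"
    then have "restr Rx phi ?T \<subseteq> restr Rx phi Q" by (rule restr_mono)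
    then show "S \<subseteq> restr Rx phi Q" using part2[OF JS] SJ by simp
  qed
  have "restr Rx phi -` U \<inter> topspace (Spc C) = {Q. prime_2r C Q \<and> \<not> ?T \<subseteq> Q}"
    unfolding U top_Spc using eq prime_restr by auto
  then show "openin (Spc C) (restr Rx phi -` U \<inter> topspace (Spc C))"
    unfolding Spc_def using Ta by (auto intro: topology_generated_by_Basis)
qed

lemma main: "(\<forall>I. hideal_2r C I \<longrightarrow> hideal_gr Rx (restr Rx phi I) \<and> extn C Rx phi (restr Rx phi I) = I)
    \<and> (\<forall>I. hideal_gr Rx I \<longrightarrow> hideal_2r C (extn C Rx phi I) \<and> restr Rx phi (extn C Rx phi I) = I)
    \<and> (\<forall>I J. hideal_2r C I \<longrightarrow> hideal_2r C J \<longrightarrow> I \<subseteq> J \<longrightarrow> restr Rx phi I \<subseteq> restr Rx phi J)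
    \<and> (\<forall>I J. hideal_gr Rx I \<longrightarrow> hideal_gr Rx J \<longrightarrow> I \<subseteq> J \<longrightarrow> extn C Rx phi I \<subseteq> extn C Rx phi J)
    \<and> homeomorphic_maps (Spec_h Rx) (Spc C) (extn C Rx phi) (restr Rx phi)"
  unfolding homeomorphic_maps_def
  using restr_hideal part1 extn_hideal_gen part2 restr_mono extn_mono cont_extn cont_restr
    top_Spec top_Spc hprime_hideal prime_hideal by auto

end

theorem theoremA15:
  fixes C :: "('o, 'm, 'z) two_ring_scheme"
    and Rx :: "'g::ab_group_add \<Rightarrow> 'r::ring_1 set"
    and tau :: "'g \<Rightarrow> 'g \<Rightarrow> 'r"
    and pi :: "'g \<Rightarrow> 'o set"
    and gr :: "'o set \<Rightarrow> 'o"
    and phi :: "'g \<Rightarrow> 'r \<Rightarrow> 'm"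
  assumes "tightening C Rx tau pi gr phi"
  shows "(\<forall>I. hideal_2r C I \<longrightarrow> hideal_gr Rx (restr Rx phi I) \<and> extn C Rx phi (restr Rx phi I) = I)
    \<and> (\<forall>I. hideal_gr Rx I \<longrightarrow> hideal_2r C (extn C Rx phi I) \<and> restr Rx phi (extn C Rx phi I) = I)
    \<and> (\<forall>I J. hideal_2r C I \<longrightarrow> hideal_2r C J \<longrightarrow> I \<subseteq> J \<longrightarrow> restr Rx phi I \<subseteq> restr Rx phi J)
    \<and> (\<forall>I J. hideal_gr Rx I \<longrightarrow> hideal_gr Rx J \<longrightarrow> I \<subseteq> J \<longrightarrow> extn C Rx phi I \<subseteq> extn C Rx phi J)
    \<and> homeomorphic_maps (Spec_h Rx) (Spc C) (extn C Rx phi) (restr Rx phi)"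
proof -
  interpret tightening C Rx tau pi gr phi by (rule assms)
  show ?thesis by (rule main)
qed

end
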